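(* Let $P=\{\sigma_c : c\in\mathbb{F}_q\}\le SL_2(\mathbb{F}_q)$, where $\sigma_c=\begin{pmatrix}1&c\\0&1\end{pmatrix}$. Then the set $\mathcal{B}=\{a_0,\Delta,\beta,\gamma_0\}$ generates the invariant ring $\mathbb{F}[V]^P$ as an $\mathbb{F}$-algebra; in fact $\mathcal{B}$ is a SAGBI basis for $\mathbb{F}[V]^P$ with respect to the graded reverse lexicographic order with $a_0<a_1<a_2$.
   Context: Let $p>2$ be a prime, $q=p^n$, and $\mathbb{F}$ a field of characteristic $p$ containing $\mathbb{F}_q$. Let $\mathbb{F}[V]=\mathbb{F}[a_0,a_1,a_2]$ (the symmetric algebra on the dual of the second symmetric power of the natural $2$-dimensional representation). The group $GL_2(\mathbb{F})$ acts on the right on $\mathbb{F}[a_0,a_1,a_2]$ by algebra automorphisms: for $g=\begin{pmatrix}\alpha&\beta'\\ \gamma'&\delta\end{pmatrix}$, $a_2 g=\alpha^2a_2+2\alpha\beta' a_1+\beta'^2a_0$, $a_1g=\alpha\gamma' a_2+(\alpha\delta+\beta'\gamma')a_1+\beta'\delta a_0$, $a_0g=\gamma'^2a_2+2\gamma'\delta a_1+\delta^2a_0$ (so $a_2,a_1,a_0$ transform like $u^2,uv,v^2$ under $u\mapsto \alpha u+\beta' v$, $v\mapsto\gamma' u+\delta v$). In particular $a_2\sigma_c=a_2+2ca_1+c^2a_0$, $a_1\sigma_c=a_1+ca_0$, $a_0\sigma_c=a_0$. For a subgroup $G$, $\mathbb{F}[V]^G$ denotes the ring of $G$-invariant polynomials.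 Define $\Delta=a_1^2-a_0a_2$, $\beta=\prod_{c\in\mathbb{F}_q}(a_1+ca_0)=a_1^q-a_0^{q-1}a_1$, and for $k\in\mathbb{F}_q$, $\gamma_k=\prod_{c\in\mathbb{F}_q}(a_2+2ca_1+(c^2-k)a_0)$. A SAGBI basis of a subalgebra $R$ of a polynomial ring (w.r.t. a monomial order) is a subset of $R$ whose lead monomials generate the algebra of lead monomials of elements of $R$. *)

theory Defs
  imports Main "HOL-Library.Poly_Mapping" "HOL-Computational_Algebra.Primes"
begin

datatype var = A0 | A1 | A2

type_synonym monom = "var \<Rightarrow>\<^sub>0 nat"
type_synonym 'a mpoly3 = "monom \<Rightarrow>\<^sub>0 'a"

definition Var :: "var \<Rightarrow> 'a::comm_ring_1 mpoly3" where
  "Var v = Poly_Mapping.single (Poly_Mapping.single v 1) 1"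

definition Const :: "'a::comm_ring_1 \<Rightarrow> 'a mpoly3" where
  "Const c = Poly_Mapping.single 0 c"

abbreviation "a0 \<equiv> Var A0"
abbreviation "a1 \<equiv> Var A1"
abbreviation "a2 \<equiv> Var A2"

definition subst :: "(var \<Rightarrow> 'a::comm_ring_1 mpoly3) \<Rightarrow> 'a mpoly3 \<Rightarrow> 'a mpoly3" where
  "subst s f = (\<Sum>m::monom\<in>Poly_Mapping.keys f. Const (Poly_Mapping.lookup f m) *
       (s A0 ^ Poly_Mapping.lookup m A0 * s A1 ^ Poly_Mapping.lookup m A1 * s A2 ^ Poly_Mapping.lookup m A2))"

definition sigma_act :: "'a::comm_ring_1 \<Rightarrow> var \<Rightarrow> 'a mpoly3" where
  "sigma_act c v = (case v of
      A0 \<Rightarrow> a0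
    | A1 \<Rightarrow> a1 + Const c * a0
    | A2 \<Rightarrow> a2 + Const (2 * c) * a1 + Const (c ^ 2) * a0)"

definition Fq :: "nat \<Rightarrow> 'a::field set" where
  "Fq q = {c. c ^ q = c}"

definition invariants_P :: "nat \<Rightarrow> 'a::field mpoly3 set" where
  "invariants_P q = {f. \<forall>c\<in>Fq q. subst (sigma_act c) f = f}"

definition Delta :: "'a::comm_ring_1 mpoly3" where
  "Delta = a1 ^ 2 - a0 * a2"

definition beta_inv :: "nat \<Rightarrow> 'a::field mpoly3" where
  "beta_inv q = (\<Prod>c\<in>Fq q. a1 + Const c * a0)"

definition gamma_inv :: "nat \<Rightarrow> 'a::field \<Rightarrow> 'a mpoly3" where
  "gamma_inv q k = (\<Prod>c\<in>Fq q. a2 + Const (2 * c) * a1 + Const (c ^ 2 - k) * a0)"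

inductive_set alg_gen :: "'a::comm_ring_1 mpoly3 set \<Rightarrow> 'a mpoly3 set" for S where
  const: "Const c \<in> alg_gen S"
| gen: "f \<in> S \<Longrightarrow> f \<in> alg_gen S"
| add: "f \<in> alg_gen S \<Longrightarrow> g \<in> alg_gen S \<Longrightarrow> f + g \<in> alg_gen S"
| mult: "f \<in> alg_gen S \<Longrightarrow> g \<in> alg_gen S \<Longrightarrow> f * g \<in> alg_gen S"

definition tdeg :: "monom \<Rightarrow> nat" where
  "tdeg m = Poly_Mapping.lookup m A0 + Poly_Mapping.lookup m A1 + Poly_Mapping.lookup m A2"

definition grevlex_less :: "monom \<Rightarrow> monom \<Rightarrow> bool" where
  "grevlex_less m m' \<longleftrightarrow>
     tdeg m < tdeg m' \<or>
     (tdeg m = tdeg m' \<and>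
       (Poly_Mapping.lookup m A0 > Poly_Mapping.lookup m' A0 \<or>
        (Poly_Mapping.lookup m A0 = Poly_Mapping.lookup m' A0 \<and> Poly_Mapping.lookup m A1 > Poly_Mapping.lookup m' A1)))"

definition lead_monom :: "'a::zero mpoly3 \<Rightarrow> monom" where
  "lead_monom f = (THE m. m \<in> Poly_Mapping.keys f \<and> (\<forall>m'\<in>Poly_Mapping.keys f. m' \<noteq> m \<longrightarrow> grevlex_less m' m))"

text \<open>Monoid (of monomials) generated by a set of monomials; its elements are
  exactly the monomials of the monomial algebra generated.\<close>
inductive_set monoid_gen :: "monom set \<Rightarrow> monom set" for S where
  unit: "0 \<in> monoid_gen S"
| gen: "m \<in> S \<Longrightarrow> m \<in> monoid_gen S"
| mult: "m \<in> monoid_gen S \<Longrightarrow> m' \<in> monoid_gen S \<Longrightarrow> m + m' \<in> monoid_gen S"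

definition sagbi_basis :: "'a::comm_ring_1 mpoly3 set \<Rightarrow> 'a mpoly3 set \<Rightarrow> bool" where
  "sagbi_basis B R \<longleftrightarrow> B \<subseteq> R \<and>
     lead_monom ` (R - {0}) = monoid_gen (lead_monom ` (B - {0}))"

end

theory Submission
  imports Defs "HOL-Computational_Algebra.Polynomial" "HOL-Library.Product_Lexorder"
begin

abbreviation lk where "lk \<equiv> Poly_Mapping.lookup"
abbreviation ks where "ks \<equiv> Poly_Mapping.keys"
abbreviation sg where "sg \<equiv> Poly_Mapping.single"

lemma monom_eqI: "lk m A0 = lk m' A0 \<Longrightarrow> lk m A1 = lk m' A1 \<Longrightarrow> lk m A2 = lk m' A2 \<Longrightarrow> (m::monom) = m'"
  apply (rule poly_mapping_eqI) subgoal for v by (cases v) auto done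

definition mon :: "(var \<Rightarrow> 'b::comm_semiring_1) \<Rightarrow> monom \<Rightarrow> 'b" where
  "mon s m = s A0 ^ lk m A0 * s A1 ^ lk m A1 * s A2 ^ lk m A2"

definition ev :: "('a::comm_ring_1 \<Rightarrow> 'b::comm_ring_1) \<Rightarrow> (var \<Rightarrow> 'b) \<Rightarrow> 'a mpoly3 \<Rightarrow> 'b" where
  "ev e s f = (\<Sum>m\<in>ks f. e (lk f m) * mon s m)"

lemma subst_ev: "subst s f = ev Const s f" by (simp add: subst_def ev_def mon_def)

lemma mon_add: "mon s (m + m') = mon s m * mon s m'"
  by (simp add: mon_def lookup_add power_add algebra_simps)

lemma mon_0[simp]: "mon s 0 = 1" by (simp add: mon_def)

lemma ev_superset: assumes "finite S" "ks f \<subseteq> S" "e 0 = 0"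
  shows "ev e s f = (\<Sum>m\<in>S. e (lk f m) * mon s m)"
  unfolding ev_def using assms by (intro sum.mono_neutral_left) (auto simp: in_keys_iff)

lemma ev_add: assumes "e 0 = 0" "\<And>x y. e (x + y) = e x + e y"
  shows "ev e s (f + g) = ev e s f + ev e s g"
proof -
  let ?S = "ks f \<union> ks g"
  have "ks (f+g) \<subseteq> ?S" by (rule keys_add)
  hence "ev e s (f + g) = (\<Sum>m\<in>?S. e (lk (f+g) m) * mon s m)" using assms by (intro ev_superset) auto
  also have "\<dots> = (\<Sum>m\<in>?S. e (lk f m) * mon s m) + (\<Sum>m\<in>?S. e (lk g m) * mon s m)"
    by (simp add: lookup_add assms(2) sum.distrib algebra_simps)
  also have "\<dots> = ev e s f + ev e s g" using assms by (subst (1 2) ev_superset[of ?S]) auto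
  finally show ?thesis .
qed

lemma ev_zero[simp]: "ev e s 0 = 0" by (simp add: ev_def)

lemma ev_single: "e 0 = 0 \<Longrightarrow> ev e s (sg m c) = e c * mon s m"
  by (cases "c = 0") (simp_all add: ev_def)

lemma ev_sum: assumes "e 0 = 0" "\<And>x y. e (x + y) = e x + e y"
  shows "ev e s (\<Sum>i\<in>I. g i) = (\<Sum>i\<in>I. ev e s (g i))"
  by (induction I rule: infinite_finite_induct) (auto simp: ev_add[OF assms])

lemma poly_expansion: "(f::'a::comm_ring_1 mpoly3) = (\<Sum>m\<in>ks f. sg m (lk f m))"
  by (rule poly_mapping_eqI) (auto simp: lookup_sum lookup_single when_def in_keys_iff
      intro: sum.neutral split: if_splits cong: sum.cong)

locale ringhom = fixes e :: "'a::comm_ring_1 \<Rightarrow> 'b::comm_ring_1"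
  assumes e0: "e 0 = 0" and e1: "e 1 = 1" and eadd: "\<And>x y. e (x + y) = e x + e y"
   and emult: "\<And>x y. e (x * y) = e x * e y"

context ringhom begin

lemma ev_add': "ev e s (f + g) = ev e s f + ev e s g" by (rule ev_add[OF e0 eadd])
lemma ev_sum': "ev e s (\<Sum>i\<in>I. g i) = (\<Sum>i\<in>I. ev e s (g i))" by (rule ev_sum[OF e0 eadd])
lemma ev_single': "ev e s (sg m c) = e c * mon s m" by (rule ev_single) (rule e0)

lemma ev_mult': "ev e s (f * g) = ev e s f * ev e s g"
proof -
  have "f * g = (\<Sum>m\<in>ks f. sg m (lk f m)) * (\<Sum>m'\<in>ks g. sg m' (lk g m'))"
    by (subst (1) poly_expansion, subst (2) poly_expansion) (rule refl)
  also have "\<dots> = (\<Sum>m\<in>ks f. \<Sum>m'\<in>ks g. sg (m + m') (lk f m * lk g m'))"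
    by (simp add: sum_product mult_single)
  finally have "ev e s (f * g) = (\<Sum>m\<in>ks f. \<Sum>m'\<in>ks g. e (lk f m) * mon s m * (e (lk g m') * mon s m'))"
    by (simp add: ev_sum' ev_single' emult mon_add algebra_simps)
  also have "\<dots> = ev e s f * ev e s g" by (simp add: ev_def sum_product)
  finally show ?thesis .
qed

lemma ev_uminus': "ev e s (- f) = - ev e s f"
proof -
  have "ev e s f + ev e s (-f) = 0" by (simp flip: ev_add')
  thus ?thesis by (metis minus_unique)
qed

lemma ev_diff': "ev e s (f - g) = ev e s f - ev e s g"
  using ev_add'[of s f "-g"] by (simp add: ev_uminus')

lemma ev_Const': "ev e s (Const c) = e c" by (simp add: Const_def ev_single')
lemma ev_one': "ev e s 1 = 1" using ev_Const'[of s 1] by (simp add: Const_def e1)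
lemma ev_Var': "ev e s (Var v) = s v"
  by (cases v) (simp_all add: Var_def ev_single' e1 mon_def lookup_single)
lemma ev_power': "ev e s (f ^ n) = ev e s f ^ n"
  by (induction n) (simp_all add: ev_one' ev_mult')
lemma ev_prod': "ev e s (\<Prod>i\<in>I. g i) = (\<Prod>i\<in>I. ev e s (g i))"
  by (induction I rule: infinite_finite_induct) (auto simp: ev_one' ev_mult')
end

lemma Const_hom: "ringhom (Const :: 'a::comm_ring_1 \<Rightarrow> 'a mpoly3)"
  by unfold_locales (simp_all add: Const_def single_add mult_single)

lemma Var_power: "(Var v :: 'a::comm_ring_1 mpoly3) ^ n = sg (sg v n) 1"
  by (induction n) (simp_all add: Var_def mult_single flip: single_add)

lemma single_expand: "(sg m c :: 'a::comm_ring_1 mpoly3) = Const c * mon Var m"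
proof -
  have "m = 0 + sg A0 (lk m A0) + sg A1 (lk m A1) + sg A2 (lk m A2)"
    by (rule monom_eqI) (simp_all add: lookup_add lookup_single)
  hence "sg m c = Const c * (sg (sg A0 (lk m A0)) 1 * sg (sg A1 (lk m A1)) 1 * sg (sg A2 (lk m A2)) 1)"
    by (simp add: Const_def mult_single)
  thus ?thesis by (simp add: mon_def Var_power)
qed

lemma hom_unique:
  fixes h :: "'a::comm_ring_1 mpoly3 \<Rightarrow> 'b::comm_ring_1"
  assumes hadd: "\<And>f g. h (f + g) = h f + h g" and hmult: "\<And>f g. h (f * g) = h f * h g" and h1: "h 1 = 1"
  shows "h f = ev (h \<circ> Const) (h \<circ> Var) f"
proof -
  have h0: "h 0 = 0" using hadd[of 0 0] by simp
  have hsum: "h (\<Sum>i\<in>I. g i) = (\<Sum>i\<in>I. h (g i))" for I and g :: "'c \<Rightarrow> 'a mpoly3"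
    by (induction I rule: infinite_finite_induct) (auto simp: h0 hadd)
  have hpow: "h (x ^ n) = h x ^ n" for x n by (induction n) (simp_all add: h1 hmult)
  have "h f = h (\<Sum>m\<in>ks f. sg m (lk f m))" by (subst poly_expansion) (rule refl)
  also have "\<dots> = (\<Sum>m\<in>ks f. h (Const (lk f m)) * mon (h \<circ> Var) m)"
    by (simp add: hsum single_expand hmult hpow mon_def)
  finally show ?thesis by (simp add: ev_def)
qed



definition key :: "monom \<Rightarrow> nat \<times> nat \<times> nat" where
  "key m = (tdeg m, tdeg m - lk m A0, tdeg m - lk m A1)"

lemma glt_key: "grevlex_less m m' \<longleftrightarrow> key m < key m'"
  unfolding grevlex_less_def key_def tdeg_def by auto

lemma key_inj: "key m = key m' \<Longrightarrow> m = m'"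
  unfolding key_def tdeg_def by (intro monom_eqI) auto

lemma key_add_less: "key m < key m' \<Longrightarrow> key (m + n) < key (m' + n)"
  unfolding key_def tdeg_def by (auto simp: lookup_add)

lemma key_add_le: "key m \<le> key m' \<Longrightarrow> key (m + n) \<le> key (m' + n)"
  using key_add_less[of m m' n] key_inj[of m m'] by (auto simp: order_le_less)

lemma lm_spec:
  assumes "f \<noteq> 0"
  shows "lead_monom f \<in> ks f \<and> (\<forall>m\<in>ks f. key m \<le> key (lead_monom f))"
proof -
  have fin: "finite (key ` ks f)" and ne: "key ` ks f \<noteq> {}" using assms by auto
  obtain m0 where m0: "m0 \<in> ks f" "key m0 = Max (key ` ks f)"
    using Max_in[OF fin ne] by auto
  have le: "\<forall>m\<in>ks f. key m \<le> key m0" using m0 fin by auto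
  have P: "m0 \<in> ks f \<and> (\<forall>m'\<in>ks f. m' \<noteq> m0 \<longrightarrow> grevlex_less m' m0)"
    using m0 le key_inj by (force simp: glt_key order_le_less)
  have "lead_monom f = m0" unfolding lead_monom_def
  proof (rule the_equality)
    fix m assume "m \<in> ks f \<and> (\<forall>m'\<in>ks f. m' \<noteq> m \<longrightarrow> grevlex_less m' m)"
    with P show "m = m0" by (metis glt_key less_asym)
  qed (rule P)
  with m0 le show ?thesis by simp
qed

lemma lm_in: "f \<noteq> 0 \<Longrightarrow> lead_monom f \<in> ks f" using lm_spec by blast
lemma lm_max: "f \<noteq> 0 \<Longrightarrow> m \<in> ks f \<Longrightarrow> key m \<le> key (lead_monom f)" using lm_spec by blast

lemma lm_eqI:
  assumes "m \<in> ks f" "\<And>m'. m' \<in> ks f \<Longrightarrow> key m' \<le> key m"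
  shows "lead_monom f = m"
proof -
  have f: "f \<noteq> 0" using assms(1) by auto
  have "key (lead_monom f) \<le> key m" using assms(2) lm_in[OF f] by blast
  moreover have "key m \<le> key (lead_monom f)" using lm_max[OF f assms(1)] .
  ultimately show ?thesis using key_inj by (metis order_antisym)
qed

definition lc :: "'a::zero mpoly3 \<Rightarrow> 'a" where "lc f = lk f (lead_monom f)"

lemma lc_nz: "f \<noteq> 0 \<Longrightarrow> lc f \<noteq> 0" unfolding lc_def using lm_in by (auto simp: in_keys_iff)

lemma key_pair_lt:
  assumes "key m \<le> key a" "key m' \<le> key b" "(m, m') \<noteq> (a, b)"
  shows "key (m + m') < key (a + b)"
proof -
  have 1: "key (m + m') \<le> key (a + m')" using key_add_le[OF assms(1)] .
  have 2: "key (a + m') \<le> key (a + b)" using key_add_le[OF assms(2), of a] by (simp add: add.commute)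
  show ?thesis
  proof (cases "m = a")
    case True
    hence "m' \<noteq> b" using assms(3) by auto
    hence "key m' < key b" using assms(2) key_inj by (auto simp: order_le_less)
    hence "key (m' + a) < key (b + a)" by (rule key_add_less)
    thus ?thesis using True by (simp add: add.commute)
  next
    case False
    hence "key m < key a" using assms(1) key_inj by (auto simp: order_le_less)
    hence "key (m + m') < key (a + m')" by (rule key_add_less)
    with 2 show ?thesis by simp
  qed
qed

lemma lm_mult_aux:
  fixes f g :: "'a::comm_ring_1 mpoly3"
  assumes f: "f \<noteq> 0" and g: "g \<noteq> 0"
  shows "lk (f * g) (lead_monom f + lead_monom g) = lc f * lc g"
    and "\<And>m. m \<in> ks (f * g) \<Longrightarrow> key m \<le> key (lead_monom f + lead_monom g)"
proof -
  let ?a = "lead_monom f" and ?b = "lead_monom g"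
  have "f * g = (\<Sum>m\<in>ks f. sg m (lk f m)) * (\<Sum>m'\<in>ks g. sg m' (lk g m'))"
    by (subst (1) poly_expansion, subst (2) poly_expansion) (rule refl)
  also have "\<dots> = (\<Sum>m\<in>ks f. \<Sum>m'\<in>ks g. sg (m + m') (lk f m * lk g m'))"
    by (simp add: sum_product mult_single)
  finally have fg: "f * g = \<dots>" .
  have "lk (f * g) (?a + ?b) = (\<Sum>m\<in>ks f. \<Sum>m'\<in>ks g. if m = ?a \<and> m' = ?b then lk f m * lk g m' else 0)"
    unfolding fg lookup_sum
  proof (intro sum.cong refl)
    fix m m' assume "m \<in> ks f" "m' \<in> ks g"
    hence "key m \<le> key ?a" "key m' \<le> key ?b" using lm_max f g by auto
    hence "(m + m' = ?a + ?b) = (m = ?a \<and> m' = ?b)"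
    proof -
      assume h: "key m \<le> key ?a" "key m' \<le> key ?b"
      show ?thesis
      proof
        assume e: "m + m' = ?a + ?b"
        show "m = ?a \<and> m' = ?b"
        proof (rule ccontr)
          assume "\<not> (m = ?a \<and> m' = ?b)"
          hence "(m, m') \<noteq> (?a, ?b)" by auto
          from key_pair_lt[OF h this] e show False by simp
        qed
      qed auto
    qed
    thus "lk (sg (m + m') (lk f m * lk g m')) (?a + ?b) = (if m = ?a \<and> m' = ?b then lk f m * lk g m' else 0)"
      by (simp add: lookup_single when_def)
  qed
  also have "\<dots> = (\<Sum>m\<in>ks f. if m = ?a then lk f m * lk g ?b else 0)"
  proof (intro sum.cong refl)
    fix m assume "m \<in> ks f"
    show "(\<Sum>m'\<in>ks g. if m = ?a \<and> m' = ?b then lk f m * lk g m' else 0) = (if m = ?a then lk f m * lk g ?b else 0)"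
      using lm_in[OF g] by (cases "m = ?a") simp_all
  qed
  also have "\<dots> = lc f * lc g" using lm_in[OF f] by (simp add: lc_def)
  finally show "lk (f * g) (?a + ?b) = lc f * lc g" .
  fix m assume "m \<in> ks (f * g)"
  then obtain x y where "m = x + y" "x \<in> ks f" "y \<in> ks g" using keys_mult by blast
  thus "key m \<le> key (?a + ?b)" using key_pair_lt[of x ?a y ?b] lm_max[OF f, of x] lm_max[OF g, of y]
    by (cases "(x,y) = (?a,?b)") (auto intro: less_imp_le)
qed

lemma lm_mult:
  fixes f g :: "'a::field mpoly3"
  assumes f: "f \<noteq> 0" and g: "g \<noteq> 0"
  shows "f * g \<noteq> 0" "lead_monom (f * g) = lead_monom f + lead_monom g" "lc (f * g) = lc f * lc g"
proof -
  have nz: "lk (f * g) (lead_monom f + lead_monom g) \<noteq> 0"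
    using lm_mult_aux(1)[OF f g] lc_nz[OF f] lc_nz[OF g] by simp
  thus "f * g \<noteq> 0" by auto
  show *: "lead_monom (f * g) = lead_monom f + lead_monom g"
    by (rule lm_eqI) (use nz lm_mult_aux(2)[OF f g] in \<open>auto simp: in_keys_iff\<close>)
  show "lc (f * g) = lc f * lc g" by (simp add: lc_def * lm_mult_aux(1)[OF f g])
qed

lemma lookup_Const_mult: "lk (Const c * h) m = c * lk h m"
  by (simp add: Const_def flip: mult_map_scale_conv_mult add: map.rep_eq when_def)

lemma keys_Const_mult: "ks (Const c * h) \<subseteq> ks h"
  by (auto simp: in_keys_iff lookup_Const_mult)

lemma subduction_step:
  fixes f h :: "'a::field mpoly3"
  assumes f: "f \<noteq> 0" and h: "h \<noteq> 0" and eq: "lead_monom f = lead_monom h"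
  defines "g \<equiv> f - Const (lc f / lc h) * h"
  shows "g = 0 \<or> key (lead_monom g) < key (lead_monom f)"
proof (cases "g = 0")
  case False
  have "lk g (lead_monom f) = 0"
    using lc_nz[OF h] by (simp add: g_def lookup_minus lookup_Const_mult lc_def eq)
  moreover have "key m \<le> key (lead_monom f)" if "m \<in> ks g" for m
  proof -
    have "m \<in> ks f \<union> ks h" using that keys_Const_mult[of "lc f / lc h" h]
      by (auto simp: g_def in_keys_iff lookup_minus lookup_Const_mult)
    thus ?thesis using lm_max[OF f, of m] lm_max[OF h, of m] eq by auto
  qed
  ultimately have "key (lead_monom g) \<le> key (lead_monom f)" "lead_monom g \<noteq> lead_monom f"
    using lm_in[OF False] by (auto simp: in_keys_iff)
  thus ?thesis using key_inj by (auto simp: order_le_less)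
qed simp

lemma wf_key: "wf {(m, m'). key m < key m'}"
proof -
  have "wf (inv_image {(x, y). x < y} key)" by (intro wf_inv_image wf)
  thus ?thesis by (simp add: inv_image_def)
qed



lemma lm_eqI':
  assumes "ks f \<subseteq> S" "lk f m \<noteq> 0" "\<And>m'. m' \<in> S \<Longrightarrow> key m' \<le> key m"
  shows "lead_monom f = m"
  using assms by (intro lm_eqI) (auto simp: in_keys_iff)

lemma keys_Const_mult_eq: "c \<noteq> 0 \<Longrightarrow> ks (Const (c::'a::field) * h) = ks h"
  by (auto simp: in_keys_iff lookup_Const_mult)

lemma Const_mult_nz: "c \<noteq> 0 \<Longrightarrow> h \<noteq> 0 \<Longrightarrow> Const (c::'a::field) * h \<noteq> 0"
  using keys_Const_mult_eq[of c h] by (metis keys_eq_empty)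

lemma lm_Const_mult: "c \<noteq> 0 \<Longrightarrow> h \<noteq> 0 \<Longrightarrow> lead_monom (Const (c::'a::field) * h) = lead_monom h"
  using lm_in[of h] lm_max[of h] by (intro lm_eqI) (auto simp: keys_Const_mult_eq)

lemma lm_add_below:
  fixes f g :: "'a::comm_ring_1 mpoly3"
  assumes f: "f \<noteq> 0" and g: "\<And>m. m \<in> ks g \<Longrightarrow> key m < key (lead_monom f)"
  shows "f + g \<noteq> 0" "lead_monom (f + g) = lead_monom f" "lc (f + g) = lc f"
proof -
  have "lk g (lead_monom f) = 0" using g by (auto simp: in_keys_iff)
  hence l: "lk (f + g) (lead_monom f) = lc f" by (simp add: lookup_add lc_def)
  hence nz: "lk (f + g) (lead_monom f) \<noteq> 0" using lc_nz[OF f] by simp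
  thus "f + g \<noteq> 0" by auto
  show *: "lead_monom (f + g) = lead_monom f"
  proof (rule lm_eqI)
    show "lead_monom f \<in> ks (f + g)" using nz by (simp add: in_keys_iff)
    fix m assume "m \<in> ks (f + g)"
    hence "m \<in> ks f \<or> m \<in> ks g" using keys_add[of f g] by blast
    thus "key m \<le> key (lead_monom f)" using lm_max[OF f] g by (auto intro: less_imp_le)
  qed
  show "lc (f + g) = lc f" using l by (simp add: lc_def *)
qed

lemma lm_power:
  fixes f :: "'a::field mpoly3"
  assumes "f \<noteq> 0"
  shows "f ^ n \<noteq> 0 \<and> lk (lead_monom (f ^ n)) v = n * lk (lead_monom f) v"
proof (induction n)
  case 0
  have "lead_monom (1::'a mpoly3) = 0" by (rule lm_eqI) (auto simp: in_keys_iff)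
  thus ?case by simp
next
  case (Suc n)
  thus ?case using lm_mult[OF assms, of "f^n"] by (simp add: lookup_add)
qed

lemma lm_prod:
  fixes g :: "'b \<Rightarrow> 'a::field mpoly3"
  assumes "finite I" "\<And>i. i \<in> I \<Longrightarrow> g i \<noteq> 0"
  shows "(\<Prod>i\<in>I. g i) \<noteq> 0 \<and> lk (lead_monom (\<Prod>i\<in>I. g i)) v = (\<Sum>i\<in>I. lk (lead_monom (g i)) v)"
  using assms
proof (induction I rule: finite_induct)
  case empty
  have "lead_monom (1::'a mpoly3) = 0" by (rule lm_eqI) (auto simp: in_keys_iff)
  thus ?case by simp
next
  case (insert x F)
  thus ?case using lm_mult[of "g x" "prod g F"] by (simp add: lookup_add)
qed

definition e0 :: monom where "e0 = sg A0 1"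
definition e1 :: monom where "e1 = sg A1 1"
definition e2 :: monom where "e2 = sg A2 1"

lemma Var_sg: "Var v = sg (sg v 1) 1" by (simp add: Var_def)

lemma sg1_eq[simp]: "sg v (Suc 0) = sg w (Suc 0) \<longleftrightarrow> v = w"
proof
  assume "sg v (Suc 0) = sg w (Suc 0)"
  hence "lk (sg v (Suc 0)) v = lk (sg w (Suc 0)) v" by simp
  thus "v = w" by (cases "v = w") (auto simp: lookup_single)
qed simp

lemma keys_CVar: "ks (Const c * Var v) \<subseteq> {sg v 1}"
  using keys_Const_mult[of c "Var v"] by (simp add: Var_def)

lemma lm_lin:
  fixes b c :: "'a::field"
  shows "lead_monom (a2 + Const b * a1 + Const c * a0) = e2"
        "lead_monom (a1 + Const c * a0) = e1"
        "a2 + Const b * a1 + Const c * a0 \<noteq> 0" "a1 + Const c * a0 \<noteq> 0"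
proof -
  have k1: "ks (a2 + Const b * a1 + Const c * a0) \<subseteq> {e2, e1, e0}"
    using keys_add[of "a2 + Const b * a1" "Const c * a0"] keys_add[of a2 "Const b * a1"]
      keys_CVar[of b A1] keys_CVar[of c A0] by (auto simp: e0_def e1_def e2_def Var_def)
  have l1: "lk (a2 + Const b * a1 + Const c * a0) e2 = 1"
    by (simp add: lookup_add lookup_Const_mult Var_def e2_def lookup_single)
  have k2: "ks (a1 + Const c * a0) \<subseteq> {e1, e0}"
    using keys_add[of a1 "Const c * a0"] keys_CVar[of c A0] by (auto simp: e0_def e1_def Var_def)
  have l2: "lk (a1 + Const c * a0) e1 = 1"
    by (simp add: lookup_add lookup_Const_mult Var_def e1_def lookup_single)
  have kk: "key e0 = (1,0,1)" "key e1 = (1,1,0)" "key e2 = (1,1,1)"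
    by (simp_all add: key_def tdeg_def e0_def e1_def e2_def lookup_single)
  show "lead_monom (a2 + Const b * a1 + Const c * a0) = e2"
    by (rule lm_eqI'[OF k1]) (use l1 kk in auto)
  show "lead_monom (a1 + Const c * a0) = e1"
    by (rule lm_eqI'[OF k2]) (use l2 kk in auto)
  show "a2 + Const b * a1 + Const c * a0 \<noteq> 0" using l1 by auto
  show "a1 + Const c * a0 \<noteq> 0" using l2 by auto
qed

lemma lm_a0: "lead_monom (a0 :: 'a::field mpoly3) = e0" "(a0 :: 'a::field mpoly3) \<noteq> 0"
  by (auto intro!: lm_eqI simp: Var_def e0_def) (metis single_zero one_neq_zero single_one lookup_single_eq lookup_zero)

lemma lm_Delta: "lead_monom (Delta :: 'a::field mpoly3) = sg A1 2" "(Delta :: 'a::field mpoly3) \<noteq> 0"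
proof -
  have 1: "(a1 :: 'a mpoly3)^2 = sg (sg A1 2) 1" by (rule Var_power)
  have 2: "(a0 :: 'a mpoly3) * a2 = sg (sg A0 1 + sg A2 1) 1" by (simp add: Var_def mult_single)
  have D: "(Delta :: 'a mpoly3) = sg (sg A1 2) 1 - sg (sg A0 1 + sg A2 1) 1"
    unfolding Delta_def 1 2 ..
  have ne: "sg A1 (2::nat) \<noteq> sg A0 1 + sg A2 1"
  proof
    assume "sg A1 (2::nat) = sg A0 1 + sg A2 1"
    hence "lk (sg A1 (2::nat)) A1 = lk (sg A0 1 + sg A2 (1::nat)) A1" by simp
    thus False by (simp add: lookup_add lookup_single)
  qed
  have l: "lk (Delta :: 'a mpoly3) (sg A1 2) = 1" using ne by (simp add: D lookup_minus lookup_single)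
  have k: "ks (Delta :: 'a mpoly3) \<subseteq> {sg A1 2, sg A0 1 + sg A2 1}"
    by (auto simp: D in_keys_iff lookup_minus lookup_single when_def split: if_splits)
  have kk: "key (sg A1 2) = (2,2,0)" "key (sg A0 1 + sg A2 1) = (2,1,2)"
    by (simp_all add: key_def tdeg_def lookup_single lookup_add)
  show "lead_monom (Delta :: 'a mpoly3) = sg A1 2" by (rule lm_eqI'[OF k]) (use l kk in auto)
  show "(Delta :: 'a mpoly3) \<noteq> 0" using l by auto
qed

lemma lm_beta:
  assumes "finite (Fq q :: 'a::field set)"
  shows "lead_monom (beta_inv q :: 'a mpoly3) = sg A1 (card (Fq q :: 'a set))" "(beta_inv q :: 'a mpoly3) \<noteq> 0"
proof -
  have P: "\<And>v. (\<Prod>c\<in>Fq q. (a1::'a mpoly3) + Const c * a0) \<noteq> 0 \<and> lk (lead_monom (\<Prod>c\<in>Fq q. (a1::'a mpoly3) + Const c * a0)) v = (\<Sum>c\<in>Fq q. lk (lead_monom (a1 + Const c * (a0::'a mpoly3))) v)"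
    using lm_prod[OF assms, of "\<lambda>c. (a1::'a mpoly3) + Const c * a0"] lm_lin by blast
  show "(beta_inv q :: 'a mpoly3) \<noteq> 0" using P lm_lin by (simp add: beta_inv_def)
  show "lead_monom (beta_inv q :: 'a mpoly3) = sg A1 (card (Fq q :: 'a set))"
  proof -
    have L: "\<And>c. lead_monom ((a1::'a mpoly3) + Const c * a0) = e1" by (rule lm_lin)
    show ?thesis by (rule monom_eqI) (simp_all only: beta_inv_def P L, simp_all add: e1_def lookup_single)
  qed
qed

lemma lm_gamma:
  assumes "finite (Fq q :: 'a::field set)"
  shows "lead_monom (gamma_inv q k :: 'a mpoly3) = sg A2 (card (Fq q :: 'a set))" "(gamma_inv q k :: 'a mpoly3) \<noteq> 0"
proof -
  have P: "\<And>v. (\<Prod>c\<in>Fq q. (a2::'a mpoly3) + Const (2*c) * a1 + Const (c^2 - k) * a0) \<noteq> 0 \<and> lk (lead_monom (\<Prod>c\<in>Fq q. (a2::'a mpoly3) + Const (2*c) * a1 + Const (c^2 - k) * a0)) v = (\<Sum>c\<in>Fq q. lk (lead_monom ((a2::'a mpoly3) + Const (2*c) * a1 + Const (c^2 - k) * a0)) v)"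
    using lm_prod[OF assms, of "\<lambda>c. (a2::'a mpoly3) + Const (2*c) * a1 + Const (c^2 - k) * a0"] lm_lin by blast
  show "(gamma_inv q k :: 'a mpoly3) \<noteq> 0" using P lm_lin by (simp add: gamma_inv_def)
  show "lead_monom (gamma_inv q k :: 'a mpoly3) = sg A2 (card (Fq q :: 'a set))"
  proof -
    have L: "\<And>c. lead_monom ((a2::'a mpoly3) + Const (2*c) * a1 + Const (c^2 - k) * a0) = e2" by (rule lm_lin)
    show ?thesis by (rule monom_eqI) (simp_all only: gamma_inv_def P L, simp_all add: e2_def lookup_single)
  qed
qed



type_synonym 'a Q = "'a poly poly poly"

definition Ec :: "'a::comm_ring_1 \<Rightarrow> 'a Q" where "Ec c = [:[:[:c:]:]:]"
definition Xq :: "var \<Rightarrow> 'a::comm_ring_1 Q" where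
  "Xq v = (case v of A0 \<Rightarrow> [:[:[:0,1:]:]:] | A1 \<Rightarrow> [:[:0,1:]:] | A2 \<Rightarrow> [:0,1:])"
definition Phi :: "'a::comm_ring_1 mpoly3 \<Rightarrow> 'a Q" where "Phi = ev Ec Xq"

lemma Ec_hom: "ringhom (Ec :: 'a::comm_ring_1 \<Rightarrow> 'a Q)"
  by unfold_locales (simp_all add: Ec_def pCons_one)

interpretation Ech: ringhom "Ec :: 'a::comm_ring_1 \<Rightarrow> 'a Q" by (rule Ec_hom)
interpretation Consth: ringhom "Const :: 'a::comm_ring_1 \<Rightarrow> 'a mpoly3" by (rule Const_hom)

lemma Phi_add: "Phi (f + g) = Phi f + Phi g" unfolding Phi_def by (rule Ech.ev_add')
lemma Phi_mult: "Phi (f * g) = Phi f * Phi g" unfolding Phi_def by (rule Ech.ev_mult')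
lemma Phi_diff: "Phi (f - g) = Phi f - Phi g" unfolding Phi_def by (rule Ech.ev_diff')
lemma Phi_uminus: "Phi (- f) = - Phi f" unfolding Phi_def by (rule Ech.ev_uminus')
lemma Phi_Const: "Phi (Const c) = Ec c" unfolding Phi_def by (rule Ech.ev_Const')
lemma Phi_one: "Phi 1 = 1" unfolding Phi_def by (rule Ech.ev_one')
lemma Phi_zero: "Phi 0 = 0" unfolding Phi_def by simp
lemma Phi_Var: "Phi (Var v) = Xq v" unfolding Phi_def by (rule Ech.ev_Var')
lemma Phi_power: "Phi (f ^ n) = Phi f ^ n" unfolding Phi_def by (rule Ech.ev_power')
lemma Phi_prod: "Phi (\<Prod>i\<in>I. g i) = (\<Prod>i\<in>I. Phi (g i))" unfolding Phi_def by (rule Ech.ev_prod')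
lemma Phi_sum: "Phi (\<Sum>i\<in>I. g i) = (\<Sum>i\<in>I. Phi (g i))" unfolding Phi_def by (rule Ech.ev_sum')

lemmas Phi_simps = Phi_add Phi_mult Phi_diff Phi_uminus Phi_Const Phi_one Phi_zero Phi_Var Phi_power Phi_prod Phi_sum

lemma Ec_mon: "Ec c * mon Xq m = monom (monom (monom c (lk m A0)) (lk m A1)) (lk m A2)"
proof -
  have e: "Xq A0 = monom (monom (monom 1 1) 0) 0" "Xq A1 = monom (monom 1 1) 0" "Xq A2 = monom 1 1"
    "Ec c = monom (monom (monom c 0) 0) 0"
    by (simp_all add: Xq_def Ec_def monom_0 monom_Suc)
  show ?thesis unfolding mon_def e by (simp add: monom_power mult_monom)
qed

definition mk :: "nat \<Rightarrow> nat \<Rightarrow> nat \<Rightarrow> monom" where "mk i j k = sg A0 i + sg A1 j + sg A2 k"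

lemma lk_mk[simp]: "lk (mk i j k) A0 = i" "lk (mk i j k) A1 = j" "lk (mk i j k) A2 = k"
  by (simp_all add: mk_def lookup_add lookup_single)

lemma mk_lk: "mk (lk m A0) (lk m A1) (lk m A2) = m" by (rule monom_eqI) simp_all

lemma Phi_coeff: "coeff (coeff (coeff (Phi f) k) j) i = lk f (mk i j k)"
proof -
  have "Phi f = (\<Sum>m\<in>ks f. monom (monom (monom (lk f m) (lk m A0)) (lk m A1)) (lk m A2))"
    by (simp add: Phi_def ev_def Ec_mon)
  hence "coeff (coeff (coeff (Phi f) k) j) i = (\<Sum>m\<in>ks f. if m = mk i j k then lk f m else 0)"
  proof (simp only: coeff_sum, intro sum.cong refl)
    fix m
    have "(lk m A2 = k \<and> lk m A1 = j \<and> lk m A0 = i) = (m = mk i j k)"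
      using monom_eqI[of m "mk i j k"] by auto
    thus "coeff (coeff (coeff (monom (monom (monom (lk f m) (lk m A0)) (lk m A1)) (lk m A2)) k) j) i =
        (if m = mk i j k then lk f m else 0)" by auto
  qed
  also have "\<dots> = lk f (mk i j k)" by (simp add: in_keys_iff)
  finally show ?thesis .
qed

lemma Phi_inj: "Phi f = Phi g \<Longrightarrow> f = g"
proof (rule poly_mapping_eqI)
  fix m assume "Phi f = Phi g"
  hence "coeff (coeff (coeff (Phi f) (lk m A2)) (lk m A1)) (lk m A0) = coeff (coeff (coeff (Phi g) (lk m A2)) (lk m A1)) (lk m A0)" by simp
  thus "lk f m = lk g m" by (simp add: Phi_coeff mk_lk)
qed

lemma Phi_eq_iff: "Phi f = Phi g \<longleftrightarrow> f = g" using Phi_inj by blast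

lemma (in ringhom) e_sum: "e (\<Sum>i\<in>I. g i) = (\<Sum>i\<in>I. e (g i))"
  by (induction I rule: infinite_finite_induct) (auto simp: e0 eadd)

lemma (in ringhom) map_poly_add: "map_poly e (p + q) = map_poly e p + map_poly e q"
  by (rule poly_eqI) (simp add: coeff_map_poly e0 eadd)
lemma (in ringhom) map_poly_mult: "map_poly e (p * q) = map_poly e p * map_poly e q"
  by (rule poly_eqI) (simp add: coeff_map_poly e0 coeff_mult e_sum emult)
lemma (in ringhom) map_poly_one: "map_poly e 1 = 1"
  by (simp add: e1)

definition Tc :: "'a::comm_ring_1 \<Rightarrow> 'a poly poly \<Rightarrow> 'a poly poly" where
  "Tc c u = pcompose u [:[:0,c:],1:]"

lemma Tc_hom: "ringhom (Tc c)"
  by unfold_locales (simp_all add: Tc_def pcompose_add pcompose_mult pcompose_1)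

definition Sc :: "'a::comm_ring_1 \<Rightarrow> 'a Q \<Rightarrow> 'a Q" where
  "Sc c P = pcompose (map_poly (Tc c) P) [:[:[:0, c^2:], [:2*c:]:], 1:]"

lemma Sc_hom: "ringhom (Sc c)"
proof -
  interpret T: ringhom "Tc c" by (rule Tc_hom)
  show ?thesis
    by unfold_locales (simp_all add: Sc_def T.map_poly_add T.map_poly_mult T.map_poly_one pcompose_add pcompose_mult pcompose_1)
qed

lemma Sc_const: "Sc c [:u:] = [:Tc c u:]"
  by (simp add: Sc_def map_poly_pCons Tc_def)

lemma Phi_sigma: "Phi (subst (sigma_act c) f) = Sc c (Phi f)"
proof -
  interpret S: ringhom "Sc c" by (rule Sc_hom)
  let ?h1 = "\<lambda>f. Phi (subst (sigma_act c) f)" and ?h2 = "\<lambda>f. Sc c (Phi f)"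
  have h1: "?h1 f = ev (?h1 \<circ> Const) (?h1 \<circ> Var) f"
    by (rule hom_unique) (simp_all add: subst_ev Consth.ev_add' Consth.ev_mult' Consth.ev_one' Phi_simps)
  have h2: "?h2 f = ev (?h2 \<circ> Const) (?h2 \<circ> Var) f"
    by (rule hom_unique) (simp_all add: Phi_simps S.eadd S.emult S.e1)
  have C: "?h1 \<circ> Const = ?h2 \<circ> Const"
    by (rule ext) (simp add: subst_ev Consth.ev_Const' Phi_Const Ec_def Sc_const Tc_def)
  have V: "?h1 \<circ> Var = ?h2 \<circ> Var"
  proof (rule ext)
    fix v show "(?h1 \<circ> Var) v = (?h2 \<circ> Var) v"
      by (cases v) (simp_all add: subst_ev Consth.ev_Var' sigma_act_def Phi_simps Xq_def Ec_def Sc_def Tc_def map_poly_pCons pcompose_pCons pcompose_1)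
  qed
  show ?thesis using h1 h2 C V by simp
qed



lemma (in ringhom) e_power: "e (x ^ n) = e x ^ n"
  by (induction n) (simp_all add: e1 emult)
lemma (in ringhom) e_prod: "e (\<Prod>i\<in>I. g i) = (\<Prod>i\<in>I. e (g i))"
  by (induction I rule: infinite_finite_induct) (auto simp: e1 emult)
lemma (in ringhom) e_uminus: "e (- x) = - e x"
  using eadd[of x "-x"] e0 by (metis add.right_inverse minus_unique)
lemma (in ringhom) e_diff: "e (x - y) = e x - e y"
  using eadd[of x "-y"] by (simp add: e_uminus)

lemma roots_prod_dvd:
  fixes P :: "'b::idom poly"
  assumes "finite S" "\<And>x. x \<in> S \<Longrightarrow> poly P x = 0"
  shows "(\<Prod>x\<in>S. [:-x,1:]) dvd P"
  using assms
proof (induction S arbitrary: P rule: finite_induct)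
  case empty then show ?case by simp
next
  case (insert x S)
  have "poly P x = 0" using insert by auto
  then obtain P1 where P: "P = [:-x,1:] * P1" using poly_eq_0_iff_dvd by (metis dvdE)
  have "poly P1 y = 0" if "y \<in> S" for y
  proof -
    have "poly P y = 0" using insert that by auto
    hence "(y - x) * poly P1 y = 0" by (simp add: P algebra_simps)
    moreover have "y \<noteq> x" using insert that by auto
    ultimately show ?thesis by simp
  qed
  hence "(\<Prod>x\<in>S. [:-x,1:]) dvd P1" using insert.IH by blast
  hence "[:-x,1:] * (\<Prod>x\<in>S. [:-x,1:]) dvd [:-x,1:] * P1" by (rule mult_dvd_mono[OF dvd_refl])
  thus ?case unfolding P prod.insert[OF insert(1,2)] .
qed

lemma prod_lin:
  fixes S :: "'b::idom set"
  assumes "finite S"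
  shows "degree (\<Prod>x\<in>S. [:-x,1:]) = card S" "coeff (\<Prod>x\<in>S. [:-x,1:]) (card S) = 1"
proof -
  show d: "degree (\<Prod>x\<in>S. [:-x,1:]) = card S" using assms by (subst degree_prod_sum_eq) auto
  have "lead_coeff (\<Prod>x\<in>S. [:-x,1:]) = 1" by (simp add: lead_coeff_prod)
  thus "coeff (\<Prod>x\<in>S. [:-x,1:]) (card S) = 1" using d by simp
qed

lemma dvd_same_degree:
  fixes a b :: "'b::idom poly"
  assumes "a dvd b" "b \<noteq> 0" "degree b \<le> degree a"
  shows "\<exists>k. b = smult k a"
proof -
  obtain c where b: "b = a * c" using assms(1) by (auto elim: dvdE)
  have "a \<noteq> 0" "c \<noteq> 0" using assms(2) b by auto
  hence "degree c = 0" using b assms(3) by (simp add: degree_mult_eq)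
  then obtain k where "c = [:k:]" by (metis degree_eq_zeroE)
  thus ?thesis using b by auto
qed

lemma Gprod:
  fixes \<phi> :: "'a::field \<Rightarrow> 'b::idom" and y :: 'b
  assumes hom: "ringhom \<phi>" and inj: "inj \<phi>" and y: "y \<noteq> 0" and fin: "finite F"
    and card: "card F = q" and Fq: "\<And>c. c \<in> F \<Longrightarrow> c^q = c" and q2: "q \<ge> 2"
  shows "(\<Prod>c\<in>F. [:-(\<phi> c * y), 1:]) = monom 1 q - [:0, y^(q-1):]"
proof -
  interpret ringhom \<phi> by (rule hom)
  define R where "R = (monom 1 q - [:0, y^(q-1):] :: 'b poly)"
  define S where "S = (\<lambda>c. \<phi> c * y) ` F"
  have injS: "inj_on (\<lambda>c. \<phi> c * y) F"
  proof (rule inj_onI)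
    fix a b assume "\<phi> a * y = \<phi> b * y"
    hence "\<phi> a = \<phi> b" using y by simp
    thus "a = b" using inj by (simp add: inj_eq)
  qed
  have P: "(\<Prod>c\<in>F. [:-(\<phi> c * y), 1:]) = (\<Prod>x\<in>S. [:-x,1:])"
    unfolding S_def by (subst prod.reindex[OF injS]) simp
  have cS: "card S = q" unfolding S_def using card_image[OF injS] card by simp
  have fS: "finite S" unfolding S_def using fin by simp
  have roots: "poly R x = 0" if xS: "x \<in> S" for x
  proof -
    obtain c where c: "c \<in> F" "x = \<phi> c * y" using xS by (auto simp: S_def)
    have "poly R x = (\<phi> c * y)^q - y^(q-1) * (\<phi> c * y)" by (simp add: R_def c poly_monom)
    also have "\<dots> = \<phi> (c^q) * y^q - \<phi> c * (y^(q-1) * y)" by (simp add: e_power power_mult_distrib algebra_simps)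
    also have "y^(q-1) * y = y^q" using q2 by (metis Suc_diff_1 less_le_trans pos2 power_Suc2)
    finally show ?thesis using Fq[OF c(1)] by simp
  qed
  have dv: "(\<Prod>x\<in>S. [:-x,1:]) dvd R" by (rule roots_prod_dvd[OF fS roots])
  have cR: "coeff R q = 1" using q2 by (simp add: R_def coeff_pCons split: nat.splits)
  hence R0: "R \<noteq> 0" by auto
  have dR: "degree R \<le> q" unfolding R_def
    by (rule degree_diff_le) (use q2 in \<open>auto intro: degree_monom_le order.trans[OF degree_pCons_le]\<close>)
  obtain k where k: "R = smult k (\<Prod>x\<in>S. [:-x,1:])"
    using dvd_same_degree[OF dv R0] dR prod_lin(1)[OF fS] cS by auto
  have "coeff R q = k" using prod_lin(2)[OF fS] cS by (simp add: k)
  hence "k = 1" using cR by simp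
  thus ?thesis using k P by (simp add: R_def)
qed



locale Setup =
  fixes p n q :: nat and ty :: "'a::field itself"
  assumes prime: "prime p" and p2: "p > 2" and n1: "n \<ge> 1" and qdef: "q = p ^ n"
    and char: "CHAR('a) = p" and card: "card (Fq q :: 'a set) = q"
begin

abbreviation F where "F \<equiv> (Fq q :: 'a set)"

lemma q_ge3: "q \<ge> 3"
proof -
  have "p ^ 1 \<le> p ^ n" using n1 p2 by (intro power_increasing) auto
  thus ?thesis using p2 qdef by simp
qed

lemma q_odd: "odd q"
proof -
  have "odd p" using prime p2 by (metis prime_odd_nat)
  thus ?thesis using qdef by simp
qed

lemma finF: "finite F" using card q_ge3 by (metis card.infinite not_numeral_le_zero)

lemma inF: "c \<in> F \<longleftrightarrow> c ^ q = c" by (simp add: Fq_def)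

lemma F_add: "c \<in> F \<Longrightarrow> d \<in> F \<Longrightarrow> c + d \<in> F"
proof -
  assume "c \<in> F" "d \<in> F"
  moreover have "(c + d) ^ q = c ^ q + d ^ q"
    by (rule freshmans_dream') (use prime char qdef in auto)
  ultimately show ?thesis by (simp add: inF)
qed

lemma F_neg: "c \<in> F \<Longrightarrow> - c \<in> F"
proof -
  assume "c \<in> F"
  moreover have "(- c) ^ q = - (c ^ q)" using q_odd by (simp add: power_minus_odd)
  ultimately show ?thesis by (simp add: inF)
qed

lemma F_diff: "c \<in> F \<Longrightarrow> d \<in> F \<Longrightarrow> c - d \<in> F"
  using F_add[of c "-d"] F_neg[of d] by simp

lemma F_0: "0 \<in> F" using q_ge3 by (simp add: inF)

lemma two_nz: "(2::'a) \<noteq> 0"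
proof
  assume "(2::'a) = 0"
  hence "of_nat 2 = (0::'a)" by simp
  hence "CHAR('a) dvd 2" by (simp only: of_nat_eq_0_iff_char_dvd)
  hence "p dvd 2" using char by simp
  thus False using p2 by (auto dest: dvd_imp_le)
qed

lemma bij_add: "c \<in> F \<Longrightarrow> bij_betw (\<lambda>d. c + d) F F"
  by (rule bij_betw_byWitness[where f' = "\<lambda>d. d - c"]) (auto intro: F_add F_diff)

lemma bij_sub: "c \<in> F \<Longrightarrow> bij_betw (\<lambda>d. c - d) F F"
  by (rule bij_betw_byWitness[where f' = "\<lambda>d. c - d"]) (auto intro: F_diff)

lemma subst_simps:
  "subst s (f + g) = subst s f + subst s g" "subst s (f * g) = subst s f * subst s g"
  "subst s (f - g) = subst s f - subst s g" "subst s (Const c) = Const c" "subst s (Var v) = s v"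
  "subst s (f ^ k) = subst s f ^ k" "subst s (\<Prod>i\<in>I. h i) = (\<Prod>i\<in>I. subst s (h i))"
  "subst s 1 = 1" "subst s 0 = 0"
  by (simp_all add: subst_ev Consth.ev_add' Consth.ev_mult' Consth.ev_diff' Consth.ev_Const'
      Consth.ev_Var' Consth.ev_power' Consth.ev_prod' Consth.ev_one')

lemma Const_simps: "Const (x * y) = Const x * (Const y :: 'a mpoly3)" "Const (x + y) = Const x + (Const y :: 'a mpoly3)"
  "Const (x - y) = Const x - (Const y :: 'a mpoly3)" "Const (x ^ k) = Const x ^ k" "Const (2::'a) = 2"
  using Consth.emult Consth.eadd Consth.e_diff Consth.e_power[of x k]
  by (simp_all add: Const_def)

lemma sig_a0: "subst (sigma_act c) a0 = a0" by (simp add: subst_simps sigma_act_def)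
lemma sig_a1: "subst (sigma_act c) a1 = a1 + Const c * a0" by (simp add: subst_simps sigma_act_def)
lemma sig_a2: "subst (sigma_act c) a2 = a2 + Const (2*c) * a1 + Const (c^2) * a0" by (simp add: subst_simps sigma_act_def)
lemmas sig_simps = subst_simps(1-4,6-9) sig_a0 sig_a1 sig_a2

lemma inv_Delta: "subst (sigma_act (c::'a)) Delta = (Delta :: 'a mpoly3)"
  by (simp add: Delta_def sig_simps Const_simps) (simp add: algebra_simps power2_eq_square)

lemma inv_beta:
  assumes "c \<in> F" shows "subst (sigma_act c) (beta_inv q) = beta_inv q"
proof -
  have "subst (sigma_act c) (beta_inv q) = (\<Prod>d\<in>F. a1 + Const (c + d) * a0)"
    by (simp add: beta_inv_def sig_simps Const_simps algebra_simps)
  also have "\<dots> = (\<Prod>d\<in>F. a1 + Const d * a0)"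
    using prod.reindex_bij_betw[OF bij_add[OF assms], of "\<lambda>d. a1 + Const d * a0"] by simp
  finally show ?thesis by (simp add: beta_inv_def)
qed

lemma inv_gamma:
  assumes "c \<in> F" shows "subst (sigma_act c) (gamma_inv q k) = gamma_inv q k"
proof -
  have "subst (sigma_act c) (gamma_inv q k) = (\<Prod>d\<in>F. a2 + Const (2 * (c + d)) * a1 + Const ((c + d)^2 - k) * a0)"
    unfolding gamma_inv_def sig_simps
    by (intro prod.cong refl) (simp add: Const_simps algebra_simps power2_eq_square)
  also have "\<dots> = (\<Prod>d\<in>F. a2 + Const (2 * d) * a1 + Const (d^2 - k) * a0)"
    using prod.reindex_bij_betw[OF bij_add[OF assms], of "\<lambda>d. a2 + Const (2 * d) * a1 + Const (d^2 - k) * a0"] by simp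
  finally show ?thesis by (simp add: gamma_inv_def)
qed

end


lemma poly_prod_roots_eq:
  fixes g :: "'c \<Rightarrow> 'b::idom" and P :: "'b poly"
  assumes fin: "finite F" and inj: "inj_on g F" and roots: "\<And>c. c \<in> F \<Longrightarrow> poly P (g c) = 0"
    and deg: "degree P \<le> card F" and nz: "P \<noteq> 0"
  shows "P = smult (coeff P (card F)) (\<Prod>c\<in>F. [:-(g c),1:])"
proof -
  define S where "S = g ` F"
  have P: "(\<Prod>c\<in>F. [:-(g c), 1:]) = (\<Prod>x\<in>S. [:-x,1:])"
    unfolding S_def by (subst prod.reindex[OF inj]) simp
  have cS: "card S = card F" unfolding S_def using card_image[OF inj] by simp
  have fS: "finite S" unfolding S_def using fin by simp
  have dv: "(\<Prod>x\<in>S. [:-x,1:]) dvd P" by (rule roots_prod_dvd[OF fS]) (use roots in \<open>auto simp: S_def\<close>)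
  obtain k where k: "P = smult k (\<Prod>x\<in>S. [:-x,1:])"
    using dvd_same_degree[OF dv nz] deg prod_lin(1)[OF fS] cS by auto
  have ck: "coeff P (card F) = k" using prod_lin(2)[OF fS] cS by (simp add: k)
  show ?thesis unfolding ck P by (rule k)
qed

lemma pcompose_monom1: "pcompose (monom 1 k) r = r ^ k"
proof (induction k)
  case 0 then show ?case by (simp add: monom_0 pCons_one pcompose_1)
next
  case (Suc k)
  have "monom (1::'a) (Suc k) = [:0,1:] * monom 1 k" by (simp add: monom_Suc)
  thus ?case using Suc by (simp add: pcompose_mult pcompose_pCons)
qed

lemma constQ_hom: "ringhom (\<lambda>u::'b::comm_ring_1. [:u:])"
  by unfold_locales (simp_all add: pCons_one)

interpretation Kh: ringhom "\<lambda>u::'b::comm_ring_1. [:u:]" by (rule constQ_hom)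

definition X0U :: "'a::comm_ring_1 poly poly" where "X0U = [:[:0,1:]:]"
definition phiU :: "'a::comm_ring_1 \<Rightarrow> 'a poly poly" where "phiU c = [:[:c:]:]"
definition rU :: "'a::comm_ring_1 \<Rightarrow> 'a poly poly" where "rU c = [:[:0,c:],1:]"
definition betaU :: "nat \<Rightarrow> 'a::field poly poly" where "betaU q = (\<Prod>c\<in>Fq q. rU c)"

lemma phiU_hom: "ringhom (phiU :: 'a::comm_ring_1 \<Rightarrow> _)"
  by unfold_locales (simp_all add: phiU_def pCons_one)

lemma phiU_inj: "inj phiU" by (rule injI) (simp add: phiU_def)

lemma rU_sub: "rU c - phiU d * X0U = rU (c - d)"
  by (simp add: rU_def phiU_def X0U_def)

lemma Phi_a0: "Phi (a0 :: 'a::comm_ring_1 mpoly3) = [:X0U:]" by (simp add: Phi_Var Xq_def X0U_def)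
lemma Phi_lin1: "Phi (a1 + Const c * (a0 :: 'a::comm_ring_1 mpoly3)) = [:rU c:]"
  by (simp add: Phi_simps Xq_def Ec_def rU_def)

context Setup begin

lemma G_eval: "(\<Prod>c\<in>F. (r - phiU c * X0U)) = r ^ q - X0U ^ (q - 1) * r"
proof -
  have "(\<Prod>c\<in>F. [:-(phiU c * X0U), 1:]) = monom 1 q - [:0, X0U^(q-1):]"
    by (rule Gprod[OF phiU_hom phiU_inj _ finF card]) (use q_ge3 in \<open>auto simp: X0U_def inF\<close>)
  hence "poly (\<Prod>c\<in>F. [:-(phiU c * X0U), 1:]) r = poly (monom 1 q - [:0, X0U^(q-1):]) r" by simp
  thus ?thesis by (simp add: poly_prod poly_monom algebra_simps)
qed

lemma betaU_eq: "c \<in> F \<Longrightarrow> betaU q = rU c ^ q - X0U ^ (q - 1) * rU c"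
proof -
  assume c: "c \<in> F"
  have "betaU q = (\<Prod>d\<in>F. rU (c - d))"
    unfolding betaU_def using prod.reindex_bij_betw[OF bij_sub[OF c], of rU] by simp
  also have "\<dots> = (\<Prod>d\<in>F. (rU c - phiU d * X0U))" by (simp add: rU_sub)
  finally show ?thesis by (simp add: G_eval)
qed

lemma Phi_beta: "Phi (beta_inv q :: 'a mpoly3) = [:betaU q:]"
  by (simp add: beta_inv_def Phi_prod Phi_lin1 betaU_def Kh.e_prod)

end


context Setup begin

definition hh where "hh = (q - 1) div 2"
lemma hh: "2 * hh = q - 1" "hh \<ge> 1" "Suc hh < q" "2 * Suc hh = Suc q"
  using q_odd q_ge3 unfolding hh_def by (auto elim!: oddE)

definition AA :: "'a poly poly" where "AA = X0U ^ (q - 1)"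

definition Rr :: "'a Q" where
  "Rr = [:betaU q ^ 2:] - monom 1 q + smult AA (monom 1 (Suc hh)) + smult AA (monom 1 (Suc hh)) - smult (AA^2) (monom 1 1)"

lemma Rr_root: assumes c: "c \<in> F" shows "poly Rr ((rU c)^2) = 0"
proof -
  let ?r = "rU c"
  have 1: "((rU c)^2)^q = (?r^q)^2" by (simp flip: power_mult add: mult.commute)
  have "((rU c)^2)^(Suc hh) = ?r^(2 * Suc hh)" by (rule power_mult[symmetric])
  also have "\<dots> = ?r^(Suc q)" using hh(4) by simp
  also have "\<dots> = ?r^q * ?r" by (rule power_Suc2)
  finally have 2: "((rU c)^2)^(Suc hh) = ?r^q * ?r" .
  have ev: "poly Rr z = betaU q ^ 2 - z^q + AA * z^(Suc hh) + AA * z^(Suc hh) - AA^2 * z" for z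
    unfolding Rr_def by (simp add: poly_monom)
  have "poly Rr (?r^2) = betaU q ^ 2 - (?r^q)^2 + AA * (?r^q * ?r) + AA * (?r^q * ?r) - AA^2 * ?r^2"
    unfolding ev 1 2 ..
  also have "\<dots> = betaU q ^ 2 - (?r^q - AA * ?r)^2" by (simp add: algebra_simps power2_eq_square)
  also have "\<dots> = 0" using betaU_eq[OF c] by (simp add: AA_def)
  finally show ?thesis .
qed

lemma Rr_coeff: "coeff Rr q = -1"
  unfolding Rr_def coeff_diff coeff_add coeff_smult coeff_monom using hh q_ge3 by (cases q) auto

lemma Rr_deg: "degree Rr \<le> q"
  unfolding Rr_def using hh q_ge3
  by (intro degree_diff_le degree_add_le order.trans[OF degree_smult_le] order.trans[OF degree_monom_le])
     (auto intro: order.trans[OF degree_pCons_le])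

lemma rU_inj_sq: "inj_on (\<lambda>c. (rU c)^2) F"
proof (rule inj_onI)
  fix c d :: 'a assume "(rU c)^2 = (rU d)^2"
  hence "rU c * rU c = rU d * rU d" by (simp add: power2_eq_square)
  hence "rU c = rU d \<or> rU c = - rU d" by (rule square_eq_iff[THEN iffD1])
  moreover have "rU c \<noteq> - rU d"
  proof
    assume "rU c = - rU d"
    hence "coeff (coeff (rU c) 1) 0 = coeff (coeff (- rU d) 1) 0" by simp
    hence "(1::'a) = -1" by (simp add: rU_def)
    hence "(2::'a) = 0" by (metis one_add_one add.right_inverse)
    thus False using two_nz by simp
  qed
  ultimately show "c = d" using two_nz by (auto simp: rU_def)
qed

lemma Rr_prod: "Rr = smult (-1) (\<Prod>c\<in>F. [:-((rU c)^2), 1:])"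
proof -
  have "Rr \<noteq> 0" using Rr_coeff by auto
  from poly_prod_roots_eq[OF finF rU_inj_sq Rr_root _ this] Rr_deg card Rr_coeff
  show ?thesis by simp
qed

lemma relation:
  "(a0::'a mpoly3) ^ q * gamma_inv q 0 = beta_inv q ^ 2 - Delta ^ q + a0^(q-1) * Delta ^ Suc hh
     + a0^(q-1) * Delta ^ Suc hh - (a0^(q-1))^2 * Delta"
proof -
  let ?D = "Phi (Delta :: 'a mpoly3)"
  have E1: "pcompose Rr ?D = Phi (beta_inv q ^ 2 - Delta ^ q + a0^(q-1) * Delta ^ Suc hh
     + a0^(q-1) * Delta ^ Suc hh - ((a0::'a mpoly3)^(q-1))^2 * Delta)"
  proof -
    have "pcompose Rr ?D = [:betaU q ^ 2:] - ?D^q + smult AA (?D^(Suc hh)) + smult AA (?D^(Suc hh)) - smult (AA^2) (?D^1)"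
      by (simp only: Rr_def pcompose_diff pcompose_add pcompose_smult pcompose_const pcompose_monom1)
    moreover have "Phi (beta_inv q ^ 2 - Delta ^ q + a0^(q-1) * Delta ^ Suc hh
     + a0^(q-1) * Delta ^ Suc hh - ((a0::'a mpoly3)^(q-1))^2 * Delta) =
       [:betaU q:] ^ 2 - ?D^q + [:X0U:]^(q-1) * (?D^(Suc hh)) + [:X0U:]^(q-1) * (?D^(Suc hh)) - ([:X0U:]^(q-1))^2 * ?D"
      by (simp only: Phi_diff Phi_add Phi_mult Phi_power Phi_beta Phi_a0)
    ultimately show ?thesis by (simp add: AA_def flip: Kh.e_power)
  qed
  have fac: "[:-((rU c)^2):] + ?D = Phi (- (a0 * (a2 + Const (2*c) * a1 + Const (c^2 - 0) * (a0 :: 'a mpoly3))))" for c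
  proof -
    have "- (a0 * (a2 + Const (2*c) * a1 + Const (c^2 - 0) * (a0 :: 'a mpoly3))) = Delta - (a1 + Const c * a0)^2"
      by (simp add: Delta_def Const_simps algebra_simps power2_eq_square)
    hence "Phi (- (a0 * (a2 + Const (2*c) * a1 + Const (c^2 - 0) * (a0 :: 'a mpoly3)))) = ?D - [:rU c:]^2"
      by (simp add: Phi_diff Phi_power Phi_lin1)
    thus ?thesis by (simp add: Kh.e_power Kh.e_uminus)
  qed
  have pc: "pcompose [:-((rU c)^2), 1:] ?D = [:-((rU c)^2):] + ?D" for c
    by (simp add: pcompose_pCons)
  have "pcompose Rr ?D = - (\<Prod>c\<in>F. Phi (- (a0 * (a2 + Const (2*c) * a1 + Const (c^2 - 0) * (a0 :: 'a mpoly3)))))"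
    unfolding Rr_prod pcompose_smult pcompose_prod pc fac by simp
  also have "\<dots> = Phi (- (\<Prod>c\<in>F. - (a0 * (a2 + Const (2*c) * a1 + Const (c^2 - 0) * (a0 :: 'a mpoly3)))))"
    by (simp add: Phi_prod Phi_uminus)
  also have "(\<Prod>c\<in>F. - (a0 * (a2 + Const (2*c) * a1 + Const (c^2 - 0) * (a0 :: 'a mpoly3))))
      = (-1)^q * (a0^q * gamma_inv q 0)"
  proof -
    have pr: "(\<Prod>c\<in>F. - (a0 * g c)) = (-1)^q * (a0^q * (\<Prod>c\<in>F. g c))" for g :: "'a \<Rightarrow> 'a mpoly3"
    proof -
      have "(\<Prod>c\<in>F. - (a0 * g c)) = (\<Prod>c\<in>F. (-1) * (a0 * g c))" by simp
      also have "\<dots> = (\<Prod>c\<in>F. -1) * ((\<Prod>c\<in>F. a0) * (\<Prod>c\<in>F. g c))" by (simp only: prod.distrib)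
      finally show ?thesis by (simp add: card)
    qed
    show ?thesis unfolding gamma_inv_def by (rule pr)
  qed
  also have "(-1::'a mpoly3)^q = -1" using q_odd by simp
  finally have E2: "pcompose Rr ?D = Phi (a0 ^ q * gamma_inv q 0)" by simp
  from E1 E2 show ?thesis by (simp add: Phi_eq_iff)
qed

end


inductive_set genQ :: "'a::comm_ring_1 Q set \<Rightarrow> 'a Q set" for S where
  const: "Ec c \<in> genQ S"
| gen: "f \<in> S \<Longrightarrow> f \<in> genQ S"
| add: "f \<in> genQ S \<Longrightarrow> g \<in> genQ S \<Longrightarrow> f + g \<in> genQ S"
| mult: "f \<in> genQ S \<Longrightarrow> g \<in> genQ S \<Longrightarrow> f * g \<in> genQ S"

lemma genQ_Phi: "P \<in> genQ (Phi ` B) \<Longrightarrow> \<exists>g \<in> alg_gen B. P = Phi g"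
proof (induction rule: genQ.induct)
  case (const c) thus ?case by (metis Phi_Const alg_gen.const)
next
  case (gen f) thus ?case by (auto intro: alg_gen.gen)
next
  case (add f g) thus ?case by (metis Phi_add alg_gen.add)
next
  case (mult f g) thus ?case by (metis Phi_mult alg_gen.mult)
qed

lemma genQ_uminus: "f \<in> genQ S \<Longrightarrow> - f \<in> genQ S"
proof -
  assume "f \<in> genQ S"
  hence "Ec (-1) * f \<in> genQ S" by (intro genQ.mult genQ.const)
  moreover have "Ec (-1) = (-1 :: 'a Q)" by (simp add: Ech.e_uminus Ech.e1)
  ultimately show ?thesis by simp
qed

lemma genQ_diff: "f \<in> genQ S \<Longrightarrow> g \<in> genQ S \<Longrightarrow> f - g \<in> genQ S"
proof -
  assume "f \<in> genQ S" "g \<in> genQ S"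
  hence "f + - g \<in> genQ S" by (intro genQ.add genQ_uminus)
  thus ?thesis by simp
qed

lemma genQ_power: "f \<in> genQ S \<Longrightarrow> f ^ k \<in> genQ S"
proof (induction k)
  case 0 have "Ec 1 \<in> genQ S" by (rule genQ.const) thus ?case by (simp add: Ec_def pCons_one)
next
  case (Suc k) thus ?case by (simp add: genQ.mult)
qed

lemma Tc_const: "Tc c [:a:] = [:a:]" by (simp add: Tc_def)
lemma Tc_X0U: "Tc c (X0U ^ k) = X0U ^ k" by (simp add: Tc_def X0U_def pcompose_const flip: Kh.e_power)

lemma Tc_nz: "x \<noteq> 0 \<Longrightarrow> Tc c (x :: 'a::idom poly poly) \<noteq> 0"
  unfolding Tc_def using pcompose_eq_0[of x "[:[:0,c:],1:]"] by auto

lemma Sc_lead: "Sc c P = P \<Longrightarrow> Tc c (lead_coeff P) = lead_coeff (P :: 'a::idom Q)"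
proof -
  assume eq: "Sc c P = P"
  interpret T: ringhom "Tc c" by (rule Tc_hom)
  have d: "degree (map_poly (Tc c) P) = degree P" by (rule degree_map_poly) (rule Tc_nz)
  have "lead_coeff (Sc c P) = lead_coeff (map_poly (Tc c) P)"
    unfolding Sc_def by (subst lead_coeff_comp) simp_all
  also have "\<dots> = Tc c (lead_coeff P)"
  proof (cases "P = 0")
    case True thus ?thesis by (simp add: T.e0)
  next
    case False thus ?thesis by (intro lead_coeff_map_poly_nz) (simp_all add: Tc_nz T.e0)
  qed
  finally show ?thesis using eq by simp
qed

context Setup begin

abbreviation "BB \<equiv> {a0, Delta, beta_inv q, gamma_inv q (0::'a)}"
abbreviation "GQ \<equiv> genQ (Phi ` BB)"

lemma GQ_a0: "[:X0U:] \<in> GQ" using genQ.gen[of "Phi a0" "Phi ` BB"] by (simp add: Phi_a0)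
lemma GQ_Delta: "Phi Delta \<in> GQ" by (rule genQ.gen) simp
lemma GQ_beta: "[:betaU q:] \<in> GQ" using genQ.gen[of "Phi (beta_inv q)" "Phi ` BB"] by (simp add: Phi_beta)

lemma GQ_const2: "[:[:w:]:] \<in> GQ"
proof (induction w)
  case 0 have "Ec 0 \<in> GQ" by (rule genQ.const) thus ?case by (simp add: Ec_def)
next
  case (pCons c w)
  have "Ec c + [:X0U:] * [:[:w:]:] \<in> GQ" by (intro genQ.add genQ.mult genQ.const GQ_a0 pCons.IH)
  thus ?case by (simp add: Ec_def X0U_def)
qed

lemma rU_prod: "(\<Prod>c\<in>F. [:- [:0,c:], 1:]) = (betaU q :: 'a poly poly)"
proof -
  have "(\<Prod>c\<in>F. [:- [:0,c:], 1:]) = (\<Prod>c\<in>F. rU (- c))" by (simp add: rU_def)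
  also have "\<dots> = betaU q"
  proof -
    have bij: "bij_betw uminus F F" by (rule bij_betw_byWitness[where f'=uminus]) (auto intro: F_neg)
    show ?thesis unfolding betaU_def using prod.reindex_bij_betw[OF bij, of rU] by simp
  qed
  finally show ?thesis .
qed

lemma betaU_deg: "degree (betaU q :: 'a poly poly) = q" "(betaU q :: 'a poly poly) \<noteq> 0"
proof -
  have inj: "inj_on (\<lambda>c. [:0,c:]) F" by (rule inj_onI) simp
  have e: "(\<Prod>c\<in>F. [:- [:0,c:], 1:]) = (\<Prod>x\<in>(\<lambda>c. [:0,c:]) ` F. [:-x,1:])"
    by (subst prod.reindex[OF inj]) simp
  have "card ((\<lambda>c. [:0::'a,c:]) ` F) = q" using card_image[OF inj] card by simp
  hence "degree (\<Prod>x\<in>(\<lambda>c. [:0::'a,c:]) ` F. [:-x,1:]) = q" using prod_lin(1)[of "(\<lambda>c. [:0::'a,c:]) ` F"] finF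
    by simp
  hence "degree (\<Prod>c\<in>F. [:- [:0,c:], 1:]) = q" by (simp only: e)
  thus "degree (betaU q :: 'a poly poly) = q" by (simp only: rU_prod)
  thus "(betaU q :: 'a poly poly) \<noteq> 0" using q_ge3 by auto
qed

lemma Tc_betaU: "c \<in> F \<Longrightarrow> Tc c (betaU q) = betaU q"
proof -
  assume c: "c \<in> F"
  interpret T: ringhom "Tc c" by (rule Tc_hom)
  have "Tc c (betaU q) = (\<Prod>d\<in>F. rU (c + d))"
    unfolding betaU_def T.e_prod by (simp add: Tc_def rU_def pcompose_pCons add.commute)
  also have "\<dots> = betaU q" unfolding betaU_def using prod.reindex_bij_betw[OF bij_add[OF c], of rU] by simp
  finally show ?thesis .
qed

lemma dickson: "(\<forall>c\<in>F. Tc c u = u) \<Longrightarrow> [:u:] \<in> GQ"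
proof (induction "degree u" arbitrary: u rule: less_induct)
  case less
  define a where "a = coeff u 0"
  define v where "v = u - [:a:]"
  interpret ringhom "Tc c" for c by (rule Tc_hom)
  have vinv: "Tc c v = v" if "c \<in> F" for c using less.prems that by (simp add: v_def e_diff Tc_const)
  have roots: "poly v x = 0" if "x \<in> (\<lambda>c. [:0,c:]) ` F" for x
  proof -
    obtain c where c: "c \<in> F" "x = [:0,c:]" using \<open>x \<in> _\<close> by auto
    have "poly v x = poly (Tc c v) 0" by (simp add: Tc_def poly_pcompose c)
    also have "\<dots> = poly v 0" using vinv[OF c(1)] by simp
    also have "\<dots> = 0" by (simp add: v_def a_def poly_0_coeff_0)
    finally show ?thesis .
  qed
  have inj: "inj_on (\<lambda>c. [:0,c:]) F" by (rule inj_onI) simp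
  have "(\<Prod>x\<in>(\<lambda>c. [:0::'a,c:]) ` F. [:-x,1:]) dvd v" by (rule roots_prod_dvd) (use finF roots in auto)
  hence "betaU q dvd v" using rU_prod by (simp add: prod.reindex[OF inj])
  then obtain w where w: "v = betaU q * w" by (auto elim: dvdE)
  show ?case
  proof (cases "v = 0")
    case True
    hence "u = [:a:]" by (simp add: v_def)
    thus ?thesis using GQ_const2 by simp
  next
    case False
    hence w0: "w \<noteq> 0" using w by auto
    have "degree v \<le> degree u" unfolding v_def by (rule degree_diff_le) auto
    moreover have "degree v = q + degree w" using degree_mult_eq[OF betaU_deg(2) w0] betaU_deg(1) w by simp
    ultimately have dw: "degree w < degree u" using q_ge3 by simp
    have "Tc c w = w" if "c \<in> F" for c
    proof -
      have "betaU q * Tc c w = betaU q * w" using vinv[OF that] w Tc_betaU[OF that] by (simp add: emult)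
      thus ?thesis using betaU_deg(2) by simp
    qed
    hence "[:w:] \<in> GQ" using less.hyps[OF dw] by blast
    hence "[:[:a:]:] + [:betaU q:] * [:w:] \<in> GQ" by (intro genQ.add genQ.mult GQ_const2 GQ_beta)
    moreover have "u = [:a:] + betaU q * w" unfolding w[symmetric] v_def by simp
    ultimately show ?thesis by (simp add: mult.commute)
  qed
qed

end


lemma Phi_Delta_eq: "Phi (Delta :: 'a::comm_ring_1 mpoly3) = [: [:0,1:]^2, - X0U :]"
  by (simp add: Delta_def Phi_simps Xq_def X0U_def power2_eq_square)

context Setup begin

lemma loc: "(\<forall>c\<in>F. Sc c P = P) \<Longrightarrow> \<exists>N. [:X0U:]^N * P \<in> GQ"
proof (induction "degree P" arbitrary: P rule: less_induct)
  case less
  define K where "K = degree P"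
  define p where "p = lead_coeff P"
  have pinv: "\<forall>c\<in>F. Tc c p = p" using less.prems Sc_lead unfolding p_def by blast
  have pG: "[:p:] \<in> GQ" by (rule dickson[OF pinv])
  show ?case
  proof (cases "K = 0")
    case True
    hence "P = [:p:]" unfolding p_def K_def by (metis degree_eq_zeroE lead_coeff_pCons(2) pCons_0_0)
    thus ?thesis using pG by (intro exI[of _ 0]) simp
  next
    case False
    define mD where "mD = - Phi (Delta :: 'a mpoly3)"
    have mD: "mD = [: - ([:0,1:]^2), X0U :]" by (simp add: mD_def Phi_Delta_eq)
    have X0: "X0U \<noteq> (0 :: 'a poly poly)" by (simp add: X0U_def)
    have dmD: "degree mD = 1" "lead_coeff mD = X0U" using X0 by (simp_all add: mD)
    have mD0: "mD \<noteq> 0" using dmD by auto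
    have dK: "degree (mD^K) = K" "lead_coeff (mD^K) = X0U^K"
      using dmD mD0 by (simp add: degree_power_eq, simp only: lead_coeff_power dmD(2))
    define P' where "P' = [:X0U^K:] * P - [:p:] * mD^K"
    have "degree P' < K"
    proof -
      have d1: "degree ([:X0U^K:] * P) \<le> K" unfolding K_def
        by (rule order.trans[OF degree_mult_le]) simp
      have d2: "degree ([:p:] * mD^K) \<le> K"
        by (rule order.trans[OF degree_mult_le]) (simp add: dK)
      have dle: "degree P' \<le> K" unfolding P'_def by (rule degree_diff_le[OF d1 d2])
      have "coeff P' K = X0U^K * p - p * X0U^K"
        using dK by (simp add: P'_def K_def p_def)
      hence c0: "coeff P' K = 0" by simp
      show ?thesis
      proof (rule ccontr)
        assume "\<not> degree P' < K"
        hence "degree P' = K" using dle by simp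
        hence "P' = 0" using c0 by (metis leading_coeff_0_iff)
        thus False using \<open>degree P' = K\<close> False by simp
      qed
    qed
    moreover have "\<forall>c\<in>F. Sc c P' = P'"
    proof
      fix c assume c: "c \<in> F"
      interpret S: ringhom "Sc c" by (rule Sc_hom)
      have "Sc c (Phi Delta) = Phi (Delta :: 'a mpoly3)" by (simp add: Phi_sigma[symmetric] inv_Delta)
      hence "Sc c mD = mD" by (simp add: mD_def S.e_uminus)
      moreover have "Sc c [:X0U^K:] = [:X0U^K:]" by (simp add: Sc_const Tc_X0U)
      moreover have "Sc c [:p:] = [:p:]" using pinv c by (simp add: Sc_const)
      moreover have "Sc c P = P" using less.prems c by blast
      ultimately show "Sc c P' = P'" unfolding P'_def S.e_diff S.emult S.e_power by simp
    qed
    ultimately obtain N where N: "[:X0U:]^N * P' \<in> GQ" using less.hyps K_def by blast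
    have "[:X0U:]^N * P' + [:X0U:]^N * ([:p:] * mD^K) \<in> GQ"
      unfolding mD_def by (intro genQ.add N genQ.mult genQ_power GQ_a0 pG genQ_uminus GQ_Delta)
    moreover have "[:X0U:]^N * P' + [:X0U:]^N * ([:p:] * mD^K) = [:X0U:]^(N + K) * P"
      by (simp add: P'_def algebra_simps power_add Kh.e_power)
    ultimately show ?thesis by metis
  qed
qed

lemma loc_mpoly:
  assumes f: "f \<in> invariants_P q"
  shows "\<exists>N. (a0::'a mpoly3)^N * f \<in> alg_gen BB"
proof -
  have "\<forall>c\<in>F. Sc c (Phi f) = Phi f" using f by (simp add: invariants_P_def Phi_sigma[symmetric])
  then obtain N where "[:X0U:]^N * Phi f \<in> GQ" using loc by blast
  hence "Phi (a0^N * f) \<in> GQ" by (simp add: Phi_mult Phi_power Phi_a0)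
  then obtain g where "g \<in> alg_gen BB" "Phi (a0^N * f) = Phi g" using genQ_Phi by blast
  thus ?thesis using Phi_inj by metis
qed

end


context Setup begin

definition std :: "nat \<times> nat \<times> bool \<times> nat \<Rightarrow> 'a mpoly3" where
  "std t = (case t of (i, b, e, g) \<Rightarrow> a0^i * Delta^b * (if e then beta_inv q else 1) * gamma_inv q 0 ^ g)"

definition W :: "'a mpoly3 set" where
  "W = {f. \<exists>T c. finite T \<and> f = (\<Sum>t\<in>T. Const (c t) * std t)}"

lemma W_zero: "0 \<in> W" unfolding W_def by (rule CollectI, rule exI[of _ "{}"]) simp

lemma W_std: "Const a * std t \<in> W"
  unfolding W_def by (rule CollectI, rule exI[of _ "{t}"], rule exI[of _ "\<lambda>_. a"]) simp

lemma W_add: assumes "f \<in> W" "g \<in> W" shows "f + g \<in> W"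
proof -
  obtain T c where T: "finite T" "f = (\<Sum>t\<in>T. Const (c t) * std t)" using assms(1) by (auto simp: W_def)
  obtain U d where U: "finite U" "g = (\<Sum>t\<in>U. Const (d t) * std t)" using assms(2) by (auto simp: W_def)
  define c' where "c' t = (if t \<in> T then c t else 0) + (if t \<in> U then d t else 0)" for t
  have "(\<Sum>t\<in>T \<union> U. Const (c' t) * std t) = (\<Sum>t\<in>T \<union> U. Const (if t \<in> T then c t else 0) * std t) + (\<Sum>t\<in>T \<union> U. Const (if t \<in> U then d t else 0) * std t)"
    by (simp add: c'_def Const_simps distrib_right sum.distrib)
  also have "(\<Sum>t\<in>T \<union> U. Const (if t \<in> T then c t else 0) * std t) = f"
    unfolding T(2) using T(1) U(1)
    by (intro sum.mono_neutral_cong_right) (auto simp: Const_def)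
  also have "(\<Sum>t\<in>T \<union> U. Const (if t \<in> U then d t else 0) * std t) = g"
    unfolding U(2) using T(1) U(1)
    by (intro sum.mono_neutral_cong_right) (auto simp: Const_def)
  finally show ?thesis unfolding W_def using T(1) U(1) by (intro CollectI exI[of _ "T \<union> U"] exI[of _ c']) simp
qed

lemma W_scale: assumes "f \<in> W" shows "Const a * f \<in> W"
proof -
  obtain T c where T: "finite T" "f = (\<Sum>t\<in>T. Const (c t) * std t)" using assms by (auto simp: W_def)
  have "Const a * f = (\<Sum>t\<in>T. Const (a * c t) * std t)"
    by (simp add: T(2) sum_distrib_left Const_simps mult.assoc)
  thus ?thesis unfolding W_def using T(1) by (intro CollectI exI[of _ T] exI[of _ "\<lambda>t. a * c t"]) simp
qed

lemma W_uminus: "f \<in> W \<Longrightarrow> - f \<in> W"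
  using W_scale[of f "-1"] by (simp add: Consth.e_uminus Consth.e1)

lemma W_diff: "f \<in> W \<Longrightarrow> g \<in> W \<Longrightarrow> f - g \<in> W"
  using W_add[of f "-g"] W_uminus[of g] by simp

lemma W_sum: "(\<And>i. i \<in> I \<Longrightarrow> h i \<in> W) \<Longrightarrow> (\<Sum>i\<in>I. h i) \<in> W"
  by (induction I rule: infinite_finite_induct) (auto intro: W_add W_zero)

lemma std_mult_pure: "std (i, b, False, g) * (a0^i' * Delta^b' * gamma_inv q 0 ^ g') = std (i + i', b + b', False, g + g')"
  by (simp add: std_def power_add algebra_simps)

lemma beta_sq: "beta_inv q ^ 2 = a0^q * gamma_inv q 0 + Delta^q - a0^(q-1) * Delta^Suc hh - a0^(q-1) * Delta^Suc hh + (a0^(q-1))^2 * (Delta :: 'a mpoly3)"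
  using relation by (simp add: algebra_simps)

lemma W_pure: "std (i, b, False, g) \<in> W" using W_std[of 1 "(i, b, False, g)"] by (simp add: Const_def)

lemma W_mult_std: "std t * std u \<in> W"
proof -
  obtain i b e g where t: "t = (i, b, e, g)" by (cases t) auto
  obtain i' b' e' g' where u: "u = (i', b', e', g')" by (cases u) auto
  show ?thesis
  proof (cases "e \<and> e'")
    case False
    hence "std t * std u = std (i + i', b + b', e \<or> e', g + g')"
      by (auto simp: t u std_def power_add algebra_simps)
    thus ?thesis using W_std[of 1] by (simp add: Const_def)
  next
    case True
    let ?s = "std (i + i', b + b', False, g + g')"
    have "std t * std u = ?s * beta_inv q ^ 2"
      using True by (simp add: t u std_def power_add algebra_simps power2_eq_square)
    also have "\<dots> = ?s * (a0^q * Delta^0 * gamma_inv q 0 ^ 1) + ?s * (a0^0 * Delta^q * gamma_inv q 0 ^ 0)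
        - ?s * (a0^(q-1) * Delta^Suc hh * gamma_inv q 0 ^ 0) - ?s * (a0^(q-1) * Delta^Suc hh * gamma_inv q 0 ^ 0)
        + ?s * (a0^(2*(q-1)) * Delta^1 * gamma_inv q 0 ^ 0)"
    proof -
      have sq: "(a0^(q-1))^2 = (a0::'a mpoly3)^(2*(q-1))" by (metis power_mult mult.commute)
      show ?thesis unfolding beta_sq sq by (simp add: algebra_simps)
    qed
    also have "\<dots> \<in> W" unfolding std_mult_pure
      by (intro W_add W_diff W_pure)
    finally show ?thesis .
  qed
qed

lemma W_mult: assumes "f \<in> W" "g \<in> W" shows "f * g \<in> W"
proof -
  obtain T c where T: "finite T" "f = (\<Sum>t\<in>T. Const (c t) * std t)" using assms(1) by (auto simp: W_def)
  obtain U d where U: "finite U" "g = (\<Sum>t\<in>U. Const (d t) * std t)" using assms(2) by (auto simp: W_def)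
  have "f * g = (\<Sum>t\<in>T. \<Sum>u\<in>U. Const (c t * d u) * (std t * std u))"
    by (simp add: T(2) U(2) sum_product Const_simps algebra_simps)
  also have "\<dots> \<in> W" by (intro W_sum W_scale W_mult_std)
  finally show ?thesis .
qed

lemma alg_gen_W: "f \<in> alg_gen BB \<Longrightarrow> f \<in> W"
proof (induction rule: alg_gen.induct)
  case (const c)
  have "std (0, 0, False, 0) = 1" by (simp add: std_def)
  thus ?case using W_std[of c "(0,0,False,0)"] by simp
next
  case (gen f)
  have e: "a0 = std (1, 0, False, 0)" "Delta = std (0, 1, False, 0)" "beta_inv q = std (0, 0, True, 0)"
    "gamma_inv q 0 = std (0, 0, False, 1)" by (simp_all add: std_def)
  have b: "std (0, 0, True, 0) \<in> W" using W_std[of 1 "(0, 0, True, 0)"] by (simp add: Const_def)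
  from gen consider "f = a0" | "f = Delta" | "f = beta_inv q" | "f = gamma_inv q 0" by blast
  thus ?case by cases (simp_all only: e W_pure b)
next
  case (add f g) thus ?case by (intro W_add) simp_all
next
  case (mult f g) thus ?case by (intro W_mult) simp_all
qed

end


context Setup begin

definition lmt :: "nat \<times> nat \<times> bool \<times> nat \<Rightarrow> monom" where
  "lmt t = (case t of (i, b, e, g) \<Rightarrow> mk i (2*b + (if e then q else 0)) (q*g))"

lemma lm_one: "lead_monom (1::'a mpoly3) = 0" by (rule lm_eqI) (auto simp: in_keys_iff)

lemma lm_std: "std t \<noteq> 0 \<and> lead_monom (std t) = lmt t"
proof -
  obtain i b e g where t: "t = (i, b, e, g)" by (cases t) auto
  have a: "a0 ^ i \<noteq> (0::'a mpoly3) \<and> lk (lead_monom ((a0::'a mpoly3) ^ i)) v = i * lk (lead_monom (a0::'a mpoly3)) v" for v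
    by (rule lm_power) (simp add: lm_a0)
  have d: "Delta ^ b \<noteq> (0::'a mpoly3) \<and> lk (lead_monom ((Delta::'a mpoly3) ^ b)) v = b * lk (lead_monom (Delta::'a mpoly3)) v" for v
    by (rule lm_power) (simp add: lm_Delta)
  have gg: "gamma_inv q 0 ^ g \<noteq> (0::'a mpoly3) \<and> lk (lead_monom ((gamma_inv q 0::'a mpoly3) ^ g)) v = g * lk (lead_monom (gamma_inv q 0::'a mpoly3)) v" for v
    by (rule lm_power) (simp add: lm_gamma finF)
  define B where "B = (if e then beta_inv q else (1::'a mpoly3))"
  have B: "B \<noteq> 0" "lk (lead_monom B) v = (if e then lk (sg A1 q) v else 0)" for v
    using lm_beta[OF finF] card by (auto simp: B_def lm_one)
  have s: "std t = a0^i * Delta^b * B * gamma_inv q 0 ^ g" by (simp add: std_def t B_def)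
  have nz1: "a0^i * Delta^b \<noteq> (0::'a mpoly3)" using a d lm_mult by blast
  have nz2: "a0^i * Delta^b * B \<noteq> 0" using nz1 B lm_mult by blast
  have nz3: "std t \<noteq> 0" unfolding s using nz2 gg lm_mult by blast
  have "lead_monom (std t) = lead_monom ((a0::'a mpoly3)^i) + lead_monom ((Delta::'a mpoly3)^b) + lead_monom B + lead_monom ((gamma_inv q 0::'a mpoly3) ^ g)"
    unfolding s using a d gg B nz1 nz2 by (simp add: lm_mult)
  hence "lead_monom (std t) = lmt t"
    by (intro monom_eqI) (simp_all add: lookup_add a d gg B lm_a0 lm_Delta lm_gamma finF card lmt_def t e0_def lookup_single)
  thus ?thesis using nz3 by simp
qed

lemma lmt_inj: "lmt t = lmt t' \<Longrightarrow> t = t'"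
proof -
  assume eq: "lmt t = lmt t'"
  obtain i b e g where t: "t = (i, b, e, g)" by (cases t) auto
  obtain i' b' e' g' where t': "t' = (i', b', e', g')" by (cases t') auto
  have 1: "i = i'" "q * g = q * g'" "2*b + (if e then q else 0) = 2*b' + (if e' then q else 0)"
    using arg_cong[OF eq, of "\<lambda>m. lk m A0"] arg_cong[OF eq, of "\<lambda>m. lk m A2"] arg_cong[OF eq, of "\<lambda>m. lk m A1"]
    by (simp_all add: lmt_def t t')
  have "g = g'" using 1(2) q_ge3 by simp
  moreover have "e = e'"
  proof (rule ccontr)
    assume "e \<noteq> e'"
    hence "odd (2*b + (if e then q else 0)) \<noteq> odd (2*b' + (if e' then q else 0))" using q_odd by auto
    thus False using 1(3) by simp
  qed
  moreover have "b = b'" using 1(3) calculation by (cases e) auto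
  ultimately show ?thesis using t t' 1(1) by simp
qed

definition Mset :: "monom set" where
  "Mset = {m. q dvd lk m A2 \<and> (even (lk m A1) \<or> q \<le> lk m A1)}"

lemma lmt_M: "lmt t \<in> Mset" by (cases t) (auto simp: lmt_def Mset_def)

lemma W_lead:
  assumes f: "f \<in> W" and f0: "f \<noteq> 0"
  shows "lead_monom f \<in> Mset"
proof -
  obtain T c where T: "finite T" "f = (\<Sum>t\<in>T. Const (c t) * std t)" using f by (auto simp: W_def)
  define T' where "T' = {t\<in>T. c t \<noteq> 0}"
  have fT': "finite T'" using T(1) by (simp add: T'_def)
  have fs: "f = (\<Sum>t\<in>T'. Const (c t) * std t)"
    unfolding T(2) T'_def using T(1) by (intro sum.mono_neutral_right) (auto simp: Const_def)
  have ne: "T' \<noteq> {}" using f0 fs by auto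
  have "Max ((\<lambda>t. key (lmt t)) ` T') \<in> (\<lambda>t. key (lmt t)) ` T'" by (rule Max_in) (use fT' ne in auto)
  then obtain t0 where t0: "t0 \<in> T'" "key (lmt t0) = Max ((\<lambda>t. key (lmt t)) ` T')" by (metis imageE)
  have lt: "key (lmt t) < key (lmt t0)" if "t \<in> T' - {t0}" for t
  proof -
    have "key (lmt t) \<le> key (lmt t0)" using that t0 fT' by auto
    moreover have "lmt t \<noteq> lmt t0" using that lmt_inj by blast
    ultimately show ?thesis using key_inj by (auto simp: order_le_less)
  qed
  have c0: "c t0 \<noteq> 0" using t0 by (simp add: T'_def)
  let ?h = "Const (c t0) * std t0"
  have h0: "?h \<noteq> 0" and lh: "lead_monom ?h = lmt t0"
    using Const_mult_nz[OF c0] lm_Const_mult[OF c0] lm_std[of t0] by auto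
  have fs2: "f = ?h + (\<Sum>t\<in>T' - {t0}. Const (c t) * std t)"
    unfolding fs using fT' t0(1) by (simp add: sum.remove)
  have below: "key m < key (lead_monom ?h)" if mk: "m \<in> ks (\<Sum>t\<in>T' - {t0}. Const (c t) * std t)" for m
  proof -
    obtain t where t: "t \<in> T' - {t0}" "m \<in> ks (Const (c t) * std t)"
      using keys_sum[of "\<lambda>t. Const (c t) * std t" "T' - {t0}"] mk by blast
    have "m \<in> ks (std t)" using t(2) keys_Const_mult by blast
    hence "key m \<le> key (lmt t)" using lm_max lm_std by metis
    thus ?thesis using lt[OF t(1)] lh by simp
  qed
  have "lead_monom f = lmt t0" unfolding fs2 using lm_add_below(2)[OF h0 below] lh by simp
  thus ?thesis using lmt_M by simp
qed

end


definition rep :: "monom \<Rightarrow> nat \<Rightarrow> monom" where "rep x k = (\<Sum>j<k. x)"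

lemma rep_in: "x \<in> monoid_gen S \<Longrightarrow> rep x k \<in> monoid_gen S"
  by (induction k) (simp_all add: rep_def monoid_gen.unit monoid_gen.mult add.commute)

lemma lk_rep: "lk (rep x k) v = k * lk x v" by (simp add: rep_def lookup_sum)

context Setup begin

abbreviation RR where "RR \<equiv> (invariants_P q :: 'a mpoly3 set)"

lemma R_Const: "Const c \<in> RR" by (simp add: invariants_P_def subst_simps)
lemma R_add: "f \<in> RR \<Longrightarrow> g \<in> RR \<Longrightarrow> f + g \<in> RR" by (simp add: invariants_P_def subst_simps)
lemma R_mult: "f \<in> RR \<Longrightarrow> g \<in> RR \<Longrightarrow> f * g \<in> RR" by (simp add: invariants_P_def subst_simps)
lemma R_diff: "f \<in> RR \<Longrightarrow> g \<in> RR \<Longrightarrow> f - g \<in> RR" by (simp add: invariants_P_def subst_simps)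

lemma BB_R: "BB \<subseteq> RR"
  by (auto simp: invariants_P_def sig_a0 inv_Delta inv_beta inv_gamma)

lemma A_R: "f \<in> alg_gen BB \<Longrightarrow> f \<in> RR"
  by (induction rule: alg_gen.induct) (use BB_R in \<open>auto intro: R_Const R_add R_mult\<close>)

lemma A_power: "f \<in> alg_gen S \<Longrightarrow> f ^ k \<in> alg_gen S"
proof (induction k)
  case 0 have "Const 1 \<in> alg_gen S" by (rule alg_gen.const) thus ?case by (simp add: Const_def)
next
  case (Suc k) thus ?case by (simp add: alg_gen.mult)
qed

lemma std_A: "std t \<in> alg_gen BB"
proof -
  obtain i b e g where t: "t = (i, b, e, g)" by (cases t) auto
  have B: "(if e then beta_inv q else 1) \<in> alg_gen BB"
  proof (cases e)
    case False have "Const 1 \<in> alg_gen BB" by (rule alg_gen.const) thus ?thesis using False by (simp add: Const_def)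
  qed (simp add: alg_gen.gen)
  show ?thesis unfolding t std_def prod.case
    by (intro alg_gen.mult A_power B) (simp_all add: alg_gen.gen)
qed

lemma realize: "m \<in> Mset \<Longrightarrow> \<exists>t. lmt t = m"
proof -
  assume m: "m \<in> Mset"
  define j where "j = lk m A1"
  define e where "e = odd j"
  define b where "b = (j - (if e then q else 0)) div 2"
  have qj: "2 * b + (if e then q else 0) = j"
  proof (cases e)
    case True
    hence "q \<le> j" using m by (auto simp: Mset_def j_def e_def)
    moreover have "even (j - q)" using True q_odd \<open>q \<le> j\<close> by (simp add: e_def)
    ultimately show ?thesis using True by (simp add: b_def)
  next
    case False thus ?thesis by (simp add: b_def e_def)
  qed
  have "lmt (lk m A0, b, e, lk m A2 div q) = m"
    using m qj by (intro monom_eqI) (auto simp: lmt_def Mset_def j_def)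
  thus ?thesis by blast
qed

lemma lead_R: assumes f: "f \<in> RR" "f \<noteq> 0" shows "lead_monom f \<in> Mset"
proof -
  obtain N where N: "(a0::'a mpoly3)^N * f \<in> alg_gen BB" using loc_mpoly[OF f(1)] by blast
  have a: "(a0::'a mpoly3)^N \<noteq> 0 \<and> lk (lead_monom ((a0::'a mpoly3)^N)) v = N * lk (lead_monom (a0::'a mpoly3)) v" for v
    by (rule lm_power) (simp add: lm_a0)
  have nz: "(a0::'a mpoly3)^N * f \<noteq> 0" and lmf: "lead_monom ((a0::'a mpoly3)^N * f) = lead_monom ((a0::'a mpoly3)^N) + lead_monom f"
    using lm_mult[of "(a0::'a mpoly3)^N" f] a f(2) by auto
  have "lead_monom ((a0::'a mpoly3)^N * f) \<in> Mset" using W_lead[OF alg_gen_W[OF N] nz] .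
  moreover have "lk (lead_monom ((a0::'a mpoly3)^N)) A1 = 0" "lk (lead_monom ((a0::'a mpoly3)^N)) A2 = 0"
    using a by (simp_all add: lm_a0 e0_def lookup_single)
  ultimately show ?thesis by (simp add: Mset_def lmf lookup_add)
qed

lemma R_sub_A: "f \<in> RR \<Longrightarrow> f \<in> alg_gen BB"
proof -
  have wf: "wf (inv_image {(m, m'). key m < key m'} (lead_monom :: 'a mpoly3 \<Rightarrow> monom))"
    by (rule wf_inv_image[OF wf_key])
  show "f \<in> RR \<Longrightarrow> f \<in> alg_gen BB"
  proof (induction f rule: wf_induct[OF wf])
    case (1 f)
    show ?case
    proof (cases "f = 0")
      case True
      have "Const 0 \<in> alg_gen BB" by (rule alg_gen.const)
      thus ?thesis using True by (simp add: Const_def)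
    next
      case False
      obtain t where t: "lmt t = lead_monom f" using realize[OF lead_R[OF "1.prems" False]] by blast
      let ?h = "std t"
      have hA: "?h \<in> alg_gen BB" by (rule std_A)
      have h0: "?h \<noteq> 0" and lh: "lead_monom ?h = lead_monom f" using lm_std[of t] t by auto
      define g where "g = f - Const (lc f / lc ?h) * ?h"
      have gR: "g \<in> RR" unfolding g_def by (intro R_diff R_mult R_Const "1.prems" A_R hA)
      have gA: "g \<in> alg_gen BB"
      proof (cases "g = 0")
        case True
        have "Const 0 \<in> alg_gen BB" by (rule alg_gen.const)
        thus ?thesis using True by (simp add: Const_def)
      next
        case False
        hence "key (lead_monom g) < key (lead_monom f)"
          using subduction_step[OF \<open>f \<noteq> 0\<close> h0 lh[symmetric]] by (simp add: g_def)
        thus ?thesis using "1.IH" gR by simp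
      qed
      have "f = g + Const (lc f / lc ?h) * ?h" by (simp add: g_def)
      also have "\<dots> \<in> alg_gen BB" by (intro alg_gen.add alg_gen.mult alg_gen.const gA hA)
      finally show ?thesis .
    qed
  qed
qed

lemma lms_BB: "lead_monom ` (BB - {0}) = {e0, sg A1 2, sg A1 q, sg A2 q}"
proof -
  have "BB - {0} = BB" using lm_a0 lm_Delta lm_beta[OF finF] lm_gamma[OF finF] by auto
  thus ?thesis using lm_a0[where 'a='a] lm_Delta[where 'a='a] lm_beta[OF finF] lm_gamma[OF finF] card by simp
qed

lemma monoid_M: "monoid_gen {e0, sg A1 2, sg A1 q, sg A2 q} = Mset"
proof
  show "monoid_gen {e0, sg A1 2, sg A1 q, sg A2 q} \<subseteq> Mset"
  proof
    fix m assume "m \<in> monoid_gen {e0, sg A1 2, sg A1 q, sg A2 q}"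
    thus "m \<in> Mset"
    proof (induction rule: monoid_gen.induct)
      case unit thus ?case by (simp add: Mset_def)
    next
      case (gen m) thus ?case by (auto simp: Mset_def e0_def lookup_single)
    next
      case (mult m m') thus ?case by (auto simp: Mset_def lookup_add)
    qed
  qed
  show "Mset \<subseteq> monoid_gen {e0, sg A1 2, sg A1 q, sg A2 q}"
  proof
    fix m assume "m \<in> Mset"
    then obtain t where t: "lmt t = m" using realize by blast
    obtain i b e g where tt: "t = (i, b, e, g)" by (cases t) auto
    let ?S = "{e0, sg A1 2, sg A1 q, sg A2 q}"
    have ei: "(if e then sg A1 q else 0) \<in> monoid_gen ?S" by (cases e) (auto intro: monoid_gen.gen monoid_gen.unit)
    have "rep e0 i + rep (sg A1 2) b + (if e then sg A1 q else 0) + rep (sg A2 q) g \<in> monoid_gen ?S"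
      by (intro monoid_gen.mult rep_in monoid_gen.gen ei) auto
    moreover have "rep e0 i + rep (sg A1 2) b + (if e then sg A1 q else 0) + rep (sg A2 q) g = m"
      unfolding t[symmetric] tt by (intro monom_eqI) (simp_all add: lmt_def lk_rep lookup_add e0_def lookup_single)
    ultimately show "m \<in> monoid_gen ?S" by simp
  qed
qed

lemma leads_R: "lead_monom ` (RR - {0}) = Mset"
proof
  show "lead_monom ` (RR - {0}) \<subseteq> Mset" using lead_R by auto
  show "Mset \<subseteq> lead_monom ` (RR - {0})"
  proof
    fix m assume "m \<in> Mset"
    then obtain t where t: "lmt t = m" using realize by blast
    have "std t \<in> RR - {0}" using A_R[OF std_A] lm_std by auto
    moreover have "lead_monom (std t) = m" using lm_std t by simp
    ultimately show "m \<in> lead_monom ` (RR - {0})" by (metis image_eqI)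
  qed
qed

lemma main: "RR = alg_gen BB \<and> sagbi_basis BB RR"
  unfolding sagbi_basis_def lms_BB monoid_M leads_R using R_sub_A A_R BB_R by auto

end


theorem theorem2p5:
  fixes p n q :: nat
  assumes "prime p" and "p > 2" and "n \<ge> 1" and "q = p ^ n"
    and "CHAR('a::field) = p"
    and "card (Fq q :: 'a set) = q"
  shows "invariants_P q = alg_gen {a0, Delta, beta_inv q, gamma_inv q (0::'a)}
    \<and> sagbi_basis {a0, Delta, beta_inv q, gamma_inv q (0::'a)} (invariants_P q)"
proof -
  interpret Setup p n q "TYPE('a)" using assms by unfold_locales auto
  show ?thesis by (rule main)
qed

end
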